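(* For every $n\ge1$, $R_n^*$ equals the supremum of $\sum_{i=1}^n\hat d_i$ over all $(\hat d_1,\dots,\hat d_n)\in\mathbb R_+^n$ and nondecreasing integrable functions $h:[0,1]\to\mathbb R_+$ satisfying $$\hat d_1\le\int_0^1h(u)\,du,\qquad \hat d_i\le\int_0^qh(u)\,du+(1-q)\hat d_{i-1}\ \ \text{for all } i=2,\dots,n,\ q\in[0,1],$$ $$\int_0^1h(u)\,P_n'(1-u)\,du=1.$$
   Context: Let $\mathcal F$ be the family of CDFs of nonnegative random variables with finite mean. In the deferred-contracts model (OSDC) with instance $(F,n)$, $X_1,\dots,X_n$ are i.i.d. with CDF $F$, revealed one at a time; at time $i$, knowing $X_1,\dots,X_i$ and the last time $\ell\ge i-1$ already covered (initially $\ell=0$), an online algorithm chooses an integer $T_i\ge0$ covering times $\ell+1,\dots,\ell+T_i$ at cost $T_iX_i$, with $T_i\ge1$ forced when $\ell=i-1$. $\mathtt{ALG}_n(F)=\mathbb E[\sum_iT_iX_i]$, $\mathtt{OPT}_n(F)=\mathbb E[\sum_{i=1}^n\min\{X_1,\dots,X_i\}]$, $R_n^D(\mathrm{ALG})=\sup_F\mathtt{ALG}_n(F)/\mathtt{OPT}_n(F)$ and $R_n^*=\inf_{\mathrm{ALG}}R_n^D(\mathrm{ALG})$. $P_n'(t)=\sum_{i=1}^n i\,t^{i-1}$. *)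

theory Defs
  imports "HOL-Probability.Probability"
begin

text \<open>An online algorithm for horizon n knows the
distribution F (given as a probability measure on the reals, whose CDF is the paper's F)
and the horizon n.  At time i (1 \<le> i \<le> n) it sees the list [X_1,...,X_i] and the last
covered time l and returns T_i.\<close>

type_synonym osdc_alg = "real measure \<Rightarrow> nat \<Rightarrow> nat \<Rightarrow> real list \<Rightarrow> nat \<Rightarrow> nat"

fun osdc_cov :: "osdc_alg \<Rightarrow> real measure \<Rightarrow> nat \<Rightarrow> (nat \<Rightarrow> real) \<Rightarrow> nat \<Rightarrow> nat" where
  "osdc_cov A F n x 0 = 0"
| "osdc_cov A F n x (Suc i) =
     osdc_cov A F n x i + A F n (Suc i) (map x [1..<Suc (Suc i)]) (osdc_cov A F n x i)"

definition osdc_T :: "osdc_alg \<Rightarrow> real measure \<Rightarrow> nat \<Rightarrow> (nat \<Rightarrow> real) \<Rightarrow> nat \<Rightarrow> nat" where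
  "osdc_T A F n x i = A F n i (map x [1..<Suc i]) (osdc_cov A F n x (i - 1))"

definition osdc_cost :: "osdc_alg \<Rightarrow> real measure \<Rightarrow> nat \<Rightarrow> (nat \<Rightarrow> real) \<Rightarrow> real" where
  "osdc_cost A F n x = (\<Sum>i=1..n. real (osdc_T A F n x i) * x i)"

definition iid :: "real measure \<Rightarrow> nat \<Rightarrow> (nat \<Rightarrow> real) measure" where
  "iid F n = PiM {1..n} (\<lambda>_. F)"

definition dist_family :: "real measure set" where
  "dist_family = {F. real_distribution F \<and> (AE x in F. 0 \<le> x) \<and> integrable F (\<lambda>x. x)}"

definition ALG :: "osdc_alg \<Rightarrow> nat \<Rightarrow> real measure \<Rightarrow> ennreal" where
  "ALG A n F = (\<integral>\<^sup>+ x. ennreal (osdc_cost A F n x) \<partial>iid F n)"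

definition OPT :: "nat \<Rightarrow> real measure \<Rightarrow> ennreal" where
  "OPT n F = (\<integral>\<^sup>+ x. ennreal (\<Sum>i=1..n. Min (x ` {1..i})) \<partial>iid F n)"

definition admissible :: "nat \<Rightarrow> osdc_alg \<Rightarrow> bool" where
  "admissible n A \<longleftrightarrow>
     (\<forall>F i xs l. 1 \<le> i \<longrightarrow> l = i - 1 \<longrightarrow> 1 \<le> A F n i xs l) \<and>
     (\<forall>F \<in> dist_family. osdc_cost A F n \<in> borel_measurable (iid F n))"

definition ratio_D :: "nat \<Rightarrow> osdc_alg \<Rightarrow> ennreal" where
  "ratio_D n A = (SUP F \<in> dist_family. ALG A n F / OPT n F)"

definition R_star :: "nat \<Rightarrow> ennreal" where
  "R_star n = (INF A \<in> {A. admissible n A}. ratio_D n A)"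

definition Pn' :: "nat \<Rightarrow> real \<Rightarrow> real" where
  "Pn' n t = (\<Sum>i=1..n. real i * t ^ (i - 1))"

definition feasible :: "nat \<Rightarrow> ((nat \<Rightarrow> real) \<times> (real \<Rightarrow> real)) set" where
  "feasible n = {(d, h).
      (\<forall>i\<in>{1..n}. 0 \<le> d i) \<and>
      (\<forall>u\<in>{0..1}. 0 \<le> h u) \<and> mono_on {0..1} h \<and> h integrable_on {0..1} \<and>
      d 1 \<le> integral {0..1} h \<and>
      (\<forall>i\<in>{2..n}. \<forall>q\<in>{0..1}. d i \<le> integral {0..q} h + (1 - q) * d (i - 1)) \<and>
      integral {0..1} (\<lambda>u. h u * Pn' n (1 - u)) = 1}"

end

theory Submission
  imports Defs
begin

definition Om :: "(nat \<Rightarrow> real) measure" where "Om = PiM UNIV (\<lambda>_. borel)"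

definition dec_meas :: "osdc_alg \<Rightarrow> real measure \<Rightarrow> nat \<Rightarrow> bool" where
  "dec_meas A F n \<longleftrightarrow> (\<forall>i l. (\<lambda>\<omega>. A F n i (map \<omega> [1..<Suc i]) l) \<in> Om \<rightarrow>\<^sub>M count_space UNIV)"

definition forced :: "osdc_alg \<Rightarrow> real measure \<Rightarrow> nat \<Rightarrow> bool" where
  "forced A F n \<longleftrightarrow> (\<forall>i xs l. 1 \<le> i \<longrightarrow> l = i - 1 \<longrightarrow> 1 \<le> A F n i xs l)"

lemma cov_ge:
  assumes "forced A F n" shows "i \<le> osdc_cov A F n \<omega> i"
proof (induction i)
  case 0 then show ?case by simp
next
  case (Suc i)
  show ?case
  proof (cases "osdc_cov A F n \<omega> i = i")
    case True
    have "\<forall>xs. 1 \<le> A F n (Suc i) xs i"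
      using assms unfolding forced_def by force
    then show ?thesis using True by (simp del: upt_Suc)
  next
    case False
    then show ?thesis using Suc by simp
  qed
qed

lemma cov_Suc_T: "osdc_cov A F n \<omega> (Suc i) = osdc_cov A F n \<omega> i + osdc_T A F n \<omega> (Suc i)"
  by (simp add: osdc_T_def)

lemma cov_local:
  "(\<And>j. 1 \<le> j \<Longrightarrow> j \<le> i \<Longrightarrow> \<omega> j = \<omega>' j) \<Longrightarrow> osdc_cov A F n \<omega> i = osdc_cov A F n \<omega>' i"
proof (induction i)
  case 0 then show ?case by simp
next
  case (Suc i)
  have "osdc_cov A F n \<omega> i = osdc_cov A F n \<omega>' i" using Suc by auto
  moreover have "map \<omega> [1..<Suc (Suc i)] = map \<omega>' [1..<Suc (Suc i)]"
    using Suc.prems by (intro map_cong) auto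
  ultimately show ?case by (simp only: osdc_cov.simps)
qed

lemma T_local:
  "(\<And>j. 1 \<le> j \<Longrightarrow> j \<le> i \<Longrightarrow> \<omega> j = \<omega>' j) \<Longrightarrow> osdc_T A F n \<omega> i = osdc_T A F n \<omega>' i"
proof -
  assume h: "\<And>j. 1 \<le> j \<Longrightarrow> j \<le> i \<Longrightarrow> \<omega> j = \<omega>' j"
  have "osdc_cov A F n \<omega> (i - 1) = osdc_cov A F n \<omega>' (i - 1)" by (rule cov_local) (use h in auto)
  moreover have "map \<omega> [1..<Suc i] = map \<omega>' [1..<Suc i]" using h by (intro map_cong) auto
  ultimately show ?thesis by (simp only: osdc_T_def)
qed

lemma cov_meas:
  assumes "dec_meas A F n"
  shows "(\<lambda>\<omega>. osdc_cov A F n \<omega> i) \<in> Om \<rightarrow>\<^sub>M count_space UNIV"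
proof (induction i)
  case 0 then show ?case by simp
next
  case (Suc i)
  have "(\<lambda>\<omega>. (\<lambda>c \<omega>. c + A F n (Suc i) (map \<omega> [1..<Suc (Suc i)]) c) (osdc_cov A F n \<omega> i) \<omega>) \<in> Om \<rightarrow>\<^sub>M count_space UNIV"
  proof (rule measurable_compose_countable[OF _ Suc])
    fix c :: nat
    have "(\<lambda>\<omega>. A F n (Suc i) (map \<omega> [1..<Suc (Suc i)]) c) \<in> Om \<rightarrow>\<^sub>M count_space UNIV"
      using assms unfolding dec_meas_def by blast
    then show "(\<lambda>\<omega>. c + A F n (Suc i) (map \<omega> [1..<Suc (Suc i)]) c) \<in> Om \<rightarrow>\<^sub>M count_space UNIV"
      using measurable_compose[of _ Om "count_space UNIV" "\<lambda>t. c + t"] by simp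
  qed
  then show ?case by simp
qed

lemma T_meas:
  assumes "dec_meas A F n"
  shows "(\<lambda>\<omega>. osdc_T A F n \<omega> i) \<in> Om \<rightarrow>\<^sub>M count_space UNIV"
proof -
  have "(\<lambda>\<omega>. (\<lambda>c \<omega>. A F n i (map \<omega> [1..<Suc i]) c) (osdc_cov A F n \<omega> (i - 1)) \<omega>) \<in> Om \<rightarrow>\<^sub>M count_space UNIV"
    by (rule measurable_compose_countable[OF _ cov_meas[OF assms]])
       (use assms in \<open>auto simp: dec_meas_def\<close>)
  then show ?thesis by (simp add: osdc_T_def)
qed

lemma Om_comp[measurable]: "(\<lambda>\<omega>. \<omega> j) \<in> Om \<rightarrow>\<^sub>M borel"
  unfolding Om_def by simp

lemma term_meas:
  assumes "dec_meas A F n"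
  shows "(\<lambda>\<omega>. ennreal (real (osdc_T A F n \<omega> j) * \<omega> j)) \<in> Om \<rightarrow>\<^sub>M borel"
proof -
  have "(\<lambda>\<omega>. real (osdc_T A F n \<omega> j)) \<in> Om \<rightarrow>\<^sub>M borel"
    by (rule measurable_compose[OF T_meas[OF assms]]) (simp add: measurable_count_space_eq1)
  then show ?thesis by measurable
qed


definition GF :: "real measure \<Rightarrow> real \<Rightarrow> real" where
  "GF F c = (\<integral>x. min x c \<partial>F)"

fun Dq :: "real measure \<Rightarrow> nat \<Rightarrow> real" where
  "Dq F 0 = 0"
| "Dq F (Suc 0) = (\<integral>x. x \<partial>F)"
| "Dq F (Suc (Suc j)) = GF F (Dq F (Suc j))"

definition et :: "real measure \<Rightarrow> nat \<Rightarrow> real \<Rightarrow> ennreal" where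
  "et F j x = (if j = 0 then ennreal x else ennreal (min x (Dq F j)))"

definition Phi :: "real measure \<Rightarrow> nat \<Rightarrow> nat \<Rightarrow> ennreal" where
  "Phi F r k = (\<Sum>s=1..k. ennreal (Dq F (r - k + s)))"

definition psi :: "real measure \<Rightarrow> nat \<Rightarrow> nat \<Rightarrow> real \<Rightarrow> ennreal" where
  "psi F r k x = (\<Sum>s=1..k. et F (r - k + s - 1) x)"

lemma fam_D:
  assumes "F \<in> dist_family"
  shows "real_distribution F" "AE x in F. 0 \<le> x" "integrable F (\<lambda>x. x)"
  using assms unfolding dist_family_def by auto

lemma integrable_min_c:
  assumes "F \<in> dist_family"
  shows "integrable F (\<lambda>x. min x c)"
proof -
  interpret real_distribution F using fam_D[OF assms] by simp
  have "integrable F (\<lambda>x. \<bar>x\<bar> + \<bar>c\<bar>)"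
    using fam_D(3)[OF assms] by auto
  then show ?thesis
    by (rule Bochner_Integration.integrable_bound) auto
qed

lemma GF_nonneg:
  assumes "F \<in> dist_family" "0 \<le> c" shows "0 \<le> GF F c"
  unfolding GF_def using fam_D(2)[OF assms(1)] assms(2)
  by (intro integral_nonneg_AE) (auto elim!: eventually_mono)

lemma GF_mono:
  assumes "F \<in> dist_family" "c \<le> c'" shows "GF F c \<le> GF F c'"
  unfolding GF_def using assms
  by (intro integral_mono integrable_min_c) auto

lemma GF_le_mean:
  assumes "F \<in> dist_family" shows "GF F c \<le> (\<integral>x. x \<partial>F)"
  unfolding GF_def using assms fam_D(3)[OF assms]
  by (intro integral_mono integrable_min_c) auto

lemma mean_nonneg:
  assumes "F \<in> dist_family" shows "0 \<le> (\<integral>x. x \<partial>F)"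
  using fam_D(2)[OF assms] by (intro integral_nonneg_AE) auto

lemma Dq_nonneg:
  assumes "F \<in> dist_family" shows "0 \<le> Dq F j"
proof (induction j rule: less_induct)
  case (less j)
  show ?case
  proof (cases j)
    case 0 then show ?thesis by simp
  next
    case (Suc j')
    show ?thesis
    proof (cases j')
      case 0 then show ?thesis using Suc mean_nonneg[OF assms] by simp
    next
      case (Suc j'')
      then show ?thesis using \<open>j = Suc j'\<close> less[of "Suc j''"] GF_nonneg[OF assms] by simp
    qed
  qed
qed

lemma Dq_dec:
  assumes "F \<in> dist_family" shows "Dq F (Suc (Suc j)) \<le> Dq F (Suc j)"
proof (induction j)
  case 0 then show ?case using GF_le_mean[OF assms] by simp
next
  case (Suc j) then show ?case using GF_mono[OF assms] by simp
qed

lemma Dq_dec':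
  assumes "F \<in> dist_family" "1 \<le> j" "j \<le> j'" shows "Dq F j' \<le> Dq F j"
  using assms(3,2)
proof (induction j' rule: dec_induct)
  case base then show ?case by simp
next
  case (step m)
  then obtain m' where "m = Suc m'" by (cases m) auto
  then show ?case using step Dq_dec[OF assms(1), of m'] by simp
qed

lemma Dq_le_mean:
  assumes "F \<in> dist_family" "1 \<le> j" shows "Dq F j \<le> (\<integral>x. x \<partial>F)"
  using Dq_dec'[OF assms(1) order.refl assms(2)] by simp

lemma et_meas[measurable]: "et F j \<in> borel_measurable borel"
  unfolding et_def by measurable

lemma et_int:
  assumes "F \<in> dist_family"
  shows "(\<integral>\<^sup>+x. et F j x \<partial>F) = ennreal (Dq F (Suc j))"
proof (cases j)
  case 0
  then show ?thesis
    using fam_D[OF assms] by (simp add: et_def nn_integral_eq_integral)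
next
  case (Suc j')
  have "AE x in F. 0 \<le> min x (Dq F j)"
    using fam_D(2)[OF assms] Dq_nonneg[OF assms, of j] by (auto elim!: eventually_mono)
  then have "(\<integral>\<^sup>+x. ennreal (min x (Dq F j)) \<partial>F) = ennreal (\<integral>x. min x (Dq F j) \<partial>F)"
    by (intro nn_integral_eq_integral integrable_min_c[OF assms])
  then show ?thesis using Suc by (simp add: et_def GF_def)
qed

lemma psi_int:
  assumes "F \<in> dist_family" "k \<le> r"
  shows "(\<integral>\<^sup>+x. psi F r k x \<partial>F) = Phi F r k"
proof -
  interpret real_distribution F using fam_D[OF assms(1)] by simp
  have "(\<integral>\<^sup>+x. psi F r k x \<partial>F) = (\<Sum>s=1..k. \<integral>\<^sup>+x. et F (r - k + s - 1) x \<partial>F)"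
    unfolding psi_def by (intro nn_integral_sum) simp
  also have "\<dots> = (\<Sum>s=1..k. ennreal (Dq F (r - k + s)))"
    by (intro sum.cong refl) (auto simp: et_int[OF assms(1)] Suc_diff_Suc)
  finally show ?thesis by (simp add: Phi_def)
qed

lemma ennreal_nat_mult: "ennreal (real T * x) = of_nat T * ennreal x"
proof (cases "0 \<le> x")
  case True then show ?thesis by (simp add: ennreal_mult ennreal_of_nat_eq_real_of_nat)
next
  case False
  then have "real T * x \<le> 0" by (simp add: mult_nonneg_nonpos)
  then show ?thesis using False by (simp add: ennreal_neg)
qed

lemma psi_split:
  assumes "T \<le> k" "k \<le> r" "k < r \<or> 1 \<le> T"
  shows "psi F r k x = (\<Sum>s=1..T. et F (r - k + s - 1) x) + (\<Sum>s=1..k-T. et F ((r - 1) - (k - T) + s) x)"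
proof -
  have "{1..k} = {1..T} \<union> {T+1..k}" using assms by auto
  then have "psi F r k x = (\<Sum>s=1..T. et F (r - k + s - 1) x) + (\<Sum>s=T+1..k. et F (r - k + s - 1) x)"
    unfolding psi_def by (subst sum.union_disjoint[symmetric]) auto
  also have "(\<Sum>s=T+1..k. et F (r - k + s - 1) x) = (\<Sum>s=1..k-T. et F (r - k + (s + T) - 1) x)"
    using sum.shift_bounds_cl_nat_ivl[of "\<lambda>s. et F (r - k + s - 1) x" 1 T "k - T"] assms(1)
    by (simp add: add.commute)
  also have "\<dots> = (\<Sum>s=1..k-T. et F ((r - 1) - (k - T) + s) x)"
    using assms by (intro sum.cong refl) (auto intro!: arg_cong[where f="\<lambda>j. et F j x"])
  finally show ?thesis .
qed

lemma psi_le: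
  assumes "k \<le> r" "k = r \<Longrightarrow> 1 \<le> T"
  shows "psi F r k x \<le> ennreal (real T * x) + Phi F (r - 1) (k - T)"
proof (cases "T \<le> k")
  case True
  have c: "k < r \<or> 1 \<le> T" using assms by linarith
  have "(\<Sum>s=1..T. et F (r - k + s - 1) x) \<le> (\<Sum>s=1..T. ennreal x)"
    by (intro sum_mono) (auto simp: et_def intro!: ennreal_leI)
  also have "\<dots> = ennreal (real T * x)" by (simp add: ennreal_nat_mult)
  finally have 1: "(\<Sum>s=1..T. et F (r - k + s - 1) x) \<le> ennreal (real T * x)" .
  have 2: "(\<Sum>s=1..k-T. et F ((r - 1) - (k - T) + s) x) \<le> Phi F (r - 1) (k - T)"
    unfolding Phi_def
    by (intro sum_mono) (auto simp: et_def intro!: ennreal_leI)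
  show ?thesis unfolding psi_split[OF True assms(1) c] using 1 2 by (rule add_mono)
next
  case False
  have "psi F r k x \<le> (\<Sum>s=1..k. ennreal x)"
    unfolding psi_def by (intro sum_mono) (auto simp: et_def intro!: ennreal_leI)
  also have "\<dots> = of_nat k * ennreal x" by simp
  also have "\<dots> \<le> of_nat T * ennreal x" using False by (intro mult_right_mono) auto
  also have "\<dots> = ennreal (real T * x)" by (simp add: ennreal_nat_mult)
  finally show ?thesis by (rule order.trans) simp
qed


definition mg :: "nat \<Rightarrow> (nat \<Rightarrow> real) \<Rightarrow> (nat \<Rightarrow> real) \<Rightarrow> (nat \<Rightarrow> real)" where
  "mg i w y = (\<lambda>j. if j < i then w j else y j)"

definition Cto :: "osdc_alg \<Rightarrow> real measure \<Rightarrow> nat \<Rightarrow> nat \<Rightarrow> (nat \<Rightarrow> real) \<Rightarrow> ennreal" where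
  "Cto A F n i w = (\<Sum>j=i..n. ennreal (real (osdc_T A F n w j) * w j))"

lemma mg_meas:
  assumes "sets F = sets borel"
  shows "mg i w \<in> PiM J (\<lambda>_. F) \<rightarrow>\<^sub>M Om"
proof -
  have "(\<lambda>y j. mg i w y j) \<in> PiM J (\<lambda>_. F) \<rightarrow>\<^sub>M PiM UNIV (\<lambda>_. borel)"
  proof (rule measurable_PiM_single')
    fix j :: nat
    show "(\<lambda>y. mg i w y j) \<in> PiM J (\<lambda>_. F) \<rightarrow>\<^sub>M borel"
    proof (cases "j < i")
      case True then show ?thesis by (simp add: mg_def)
    next
      case False
      show ?thesis
      proof (cases "j \<in> J")
        case True
        have "(\<lambda>y. y j) \<in> PiM J (\<lambda>_. F) \<rightarrow>\<^sub>M F" using True by simp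
        then have "(\<lambda>y. y j) \<in> PiM J (\<lambda>_. F) \<rightarrow>\<^sub>M borel"
          using measurable_cong_sets[OF refl assms] by blast
        then show ?thesis using False by (simp add: mg_def)
      next
        case jJ: False
        have "\<forall>y\<in>space (PiM J (\<lambda>_. F)). mg i w y j = undefined"
          using False jJ by (auto simp: mg_def space_PiM PiE_def extensional_def)
        then show ?thesis
          using measurable_cong[of "PiM J (\<lambda>_. F)" "\<lambda>y. mg i w y j" "\<lambda>y. undefined" borel] by simp
      qed
    qed
  qed auto
  then show ?thesis unfolding Om_def by (simp add: fun_eq_iff)
qed

lemma Cto_meas_Om:
  assumes "dec_meas A F n"
  shows "Cto A F n i \<in> Om \<rightarrow>\<^sub>M borel"
  unfolding Cto_def
  by (intro borel_measurable_sum term_meas[OF assms])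

lemma Cto_mg_meas:
  assumes "dec_meas A F n" "sets F = sets borel"
  shows "(\<lambda>y. Cto A F n i (mg i' w y)) \<in> borel_measurable (PiM J (\<lambda>_. F))"
  using measurable_compose[OF mg_meas[OF assms(2)] Cto_meas_Om[OF assms(1)]] by (simp add: comp_def)

lemma mg_upd: "mg m w (y(m := x)) = mg (Suc m) (w(m := x)) (y::nat\<Rightarrow>real)"
  by (auto simp: mg_def fun_eq_iff)

lemma dp_step_eq:
  assumes fam: "F \<in> dist_family" and dm: "dec_meas A F n" and m: "1 \<le> m" "m \<le> n"
  shows "(\<integral>\<^sup>+y. Cto A F n m (mg m w y) \<partial>PiM {m..n} (\<lambda>_. F)) =
    (\<integral>\<^sup>+x. ennreal (real (osdc_T A F n (w(m := x)) m) * x) +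
       (\<integral>\<^sup>+y. Cto A F n (Suc m) (mg (Suc m) (w(m := x)) y) \<partial>PiM {Suc m..n} (\<lambda>_. F)) \<partial>F)"
proof -
  interpret F: real_distribution F using fam_D[OF fam] by simp
  interpret PS: product_sigma_finite "\<lambda>_. F"
    unfolding product_sigma_finite_def by (simp add: F.sigma_finite_measure_axioms)
  interpret PI: prob_space "PiM {Suc m..n} (\<lambda>_. F)"
    by (rule prob_space_PiM) (simp add: F.prob_space_axioms)
  have ins: "{m..n} = insert m {Suc m..n}" using m by auto
  have "(\<integral>\<^sup>+y. Cto A F n m (mg m w y) \<partial>PiM {m..n} (\<lambda>_. F)) =
     (\<integral>\<^sup>+x. (\<integral>\<^sup>+y. Cto A F n m (mg m w (y(m := x))) \<partial>PiM {Suc m..n} (\<lambda>_. F)) \<partial>F)"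
    unfolding ins
    by (rule PS.product_nn_integral_insert_rev) (auto intro!: Cto_mg_meas[OF dm])
  also have "\<dots> = (\<integral>\<^sup>+x. ennreal (real (osdc_T A F n (w(m := x)) m) * x) +
       (\<integral>\<^sup>+y. Cto A F n (Suc m) (mg (Suc m) (w(m := x)) y) \<partial>PiM {Suc m..n} (\<lambda>_. F)) \<partial>F)"
  proof (intro nn_integral_cong)
    fix x
    have eq: "Cto A F n m (mg m w (y(m := x))) =
       ennreal (real (osdc_T A F n (w(m := x)) m) * x) + Cto A F n (Suc m) (mg (Suc m) (w(m := x)) y)" for y
    proof -
      have "osdc_T A F n (mg (Suc m) (w(m := x)) y) m = osdc_T A F n (w(m := x)) m"
        by (rule T_local) (auto simp: mg_def)
      moreover have "mg (Suc m) (w(m := x)) y m = x" by (simp add: mg_def)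
      ultimately show ?thesis
        unfolding mg_upd Cto_def using m by (simp add: sum.atLeast_Suc_atMost)
    qed
    show "(\<integral>\<^sup>+y. Cto A F n m (mg m w (y(m := x))) \<partial>PiM {Suc m..n} (\<lambda>_. F)) =
       ennreal (real (osdc_T A F n (w(m := x)) m) * x) +
       (\<integral>\<^sup>+y. Cto A F n (Suc m) (mg (Suc m) (w(m := x)) y) \<partial>PiM {Suc m..n} (\<lambda>_. F))"
      unfolding eq
      by (subst nn_integral_add) (auto intro!: Cto_mg_meas[OF dm] simp: PI.emeasure_space_1)
  qed
  finally show ?thesis .
qed


lemma dp_lower_ind:
  assumes fam: "F \<in> dist_family" and fo: "forced A F n" and dm: "dec_meas A F n"
  shows "k \<le> n \<Longrightarrow> 1 \<le> Suc n - k \<Longrightarrow> \<forall>w. Phi F k (n - osdc_cov A F n w (n - k)) \<le>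
     (\<integral>\<^sup>+y. Cto A F n (Suc n - k) (mg (Suc n - k) w y) \<partial>PiM {Suc n - k..n} (\<lambda>_. F))"
proof (induction k)
  case 0
  show ?case
  proof
    fix w
    have "n \<le> osdc_cov A F n w n" by (rule cov_ge[OF fo])
    then show "Phi F 0 (n - osdc_cov A F n w (n - 0)) \<le> (\<integral>\<^sup>+y. Cto A F n (Suc n - 0) (mg (Suc n - 0) w y) \<partial>PiM {Suc n - 0..n} (\<lambda>_. F))"
      by (simp add: Phi_def)
  qed
next
  case (Suc k)
  define m where "m = n - k"
  have m: "1 \<le> m" "m \<le> n" "Suc n - Suc k = m" "Suc n - k = Suc m" "n - Suc k = m - 1" "n - k = m"
    using Suc.prems unfolding m_def by auto
  have IH: "\<forall>w. Phi F k (n - osdc_cov A F n w m) \<le>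
     (\<integral>\<^sup>+y. Cto A F n (Suc m) (mg (Suc m) w y) \<partial>PiM {Suc m..n} (\<lambda>_. F))"
  proof -
    have "k \<le> n" "1 \<le> Suc n - k" using Suc.prems by auto
    from Suc.IH[OF this] show ?thesis by (simp only: m(4,6) simp_thms)
  qed
  show ?case
  proof
    fix w
    define c where "c = osdc_cov A F n w (m - 1)"
    define T where "T x = osdc_T A F n (w(m := x)) m" for x
    define inner where "inner x = (\<integral>\<^sup>+y. Cto A F n (Suc m) (mg (Suc m) (w(m := x)) y) \<partial>PiM {Suc m..n} (\<lambda>_. F))" for x
    have cge: "m - 1 \<le> c" unfolding c_def by (rule cov_ge[OF fo])
    have kr: "n - c \<le> Suc k" using cge m by linarith
    have cov_x: "osdc_cov A F n (w(m := x)) m = c + T x" for x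
    proof -
      have "osdc_cov A F n (w(m := x)) m = osdc_cov A F n (w(m := x)) (m - 1) + osdc_T A F n (w(m := x)) m"
        using cov_Suc_T[of A F n "w(m := x)" "m - 1"] m by simp
      moreover have "osdc_cov A F n (w(m := x)) (m - 1) = c"
        unfolding c_def by (rule cov_local) auto
      ultimately show ?thesis by (simp add: T_def)
    qed
    have forcedT: "1 \<le> T x" if "n - c = Suc k" for x
    proof -
      have "c = m - 1" using that cge m by linarith
      have "osdc_cov A F n (w(m := x)) (m - 1) = c"
        unfolding c_def by (rule cov_local) auto
      then have e: "osdc_cov A F n (w(m := x)) (m - 1) = m - 1" using \<open>c = m - 1\<close> by simp
      show ?thesis unfolding T_def osdc_T_def e using fo m(1) unfolding forced_def by blast
    qed
    have pt: "psi F (Suc k) (n - c) x \<le> ennreal (real (T x) * x) + inner x" for x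
    proof -
      have "psi F (Suc k) (n - c) x \<le> ennreal (real (T x) * x) + Phi F (Suc k - 1) (n - c - T x)"
        by (rule psi_le[OF kr forcedT])
      also have "Phi F (Suc k - 1) (n - c - T x) \<le> inner x"
        using IH[rule_format, of "w(m := x)"] unfolding cov_x inner_def by (simp add: diff_diff_left)
      finally show ?thesis by (simp add: add_left_mono)
    qed
    have "Phi F (Suc k) (n - c) = (\<integral>\<^sup>+x. psi F (Suc k) (n - c) x \<partial>F)"
      by (rule psi_int[OF fam kr, symmetric])
    also have "\<dots> \<le> (\<integral>\<^sup>+x. ennreal (real (T x) * x) + inner x \<partial>F)"
      by (intro nn_integral_mono pt)
    also have "\<dots> = (\<integral>\<^sup>+y. Cto A F n m (mg m w y) \<partial>PiM {m..n} (\<lambda>_. F))"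
      unfolding T_def inner_def by (rule dp_step_eq[OF fam dm m(1,2), symmetric])
    finally show "Phi F (Suc k) (n - osdc_cov A F n w (n - Suc k)) \<le>
       (\<integral>\<^sup>+y. Cto A F n (Suc n - Suc k) (mg (Suc n - Suc k) w y) \<partial>PiM {Suc n - Suc k..n} (\<lambda>_. F))"
      using m by (simp add: c_def)
  qed
qed

lemma Cto_mg1: "Cto A F n 1 (mg 1 w y) = Cto A F n 1 y"
  unfolding Cto_def
proof (intro sum.cong refl)
  fix j assume j: "j \<in> {1..n}"
  have "osdc_T A F n (mg 1 w y) j = osdc_T A F n y j" by (rule T_local) (auto simp: mg_def)
  moreover have "mg 1 w y j = y j" using j by (auto simp: mg_def)
  ultimately show "ennreal (real (osdc_T A F n (mg 1 w y) j) * mg 1 w y j) = ennreal (real (osdc_T A F n y j) * y j)"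
    by simp
qed

lemma AE_iid_nonneg:
  assumes fam: "F \<in> dist_family"
  shows "AE y in iid F n. \<forall>j\<in>{1..n}. 0 \<le> y j"
proof -
  interpret F: real_distribution F using fam_D[OF fam] by simp
  show ?thesis unfolding iid_def
    by (intro eventually_ball_finite ballI AE_PiM_component) (auto simp: F.prob_space_axioms fam_D(2)[OF fam])
qed

lemma ALG_eq_Cto:
  assumes fam: "F \<in> dist_family"
  shows "ALG A n F = (\<integral>\<^sup>+y. Cto A F n 1 y \<partial>iid F n)"
  unfolding ALG_def
proof (rule nn_integral_cong_AE)
  show "AE y in iid F n. ennreal (osdc_cost A F n y) = Cto A F n 1 y"
    using AE_iid_nonneg[OF fam, of n]
  proof eventually_elim
    case (elim y)
    then show ?case unfolding osdc_cost_def Cto_def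
      by (subst sum_ennreal[symmetric]) auto
  qed
qed

lemma sum_Dq_ennreal:
  assumes fam: "F \<in> dist_family"
  shows "Phi F n n = ennreal (\<Sum>s=1..n. Dq F s)"
  unfolding Phi_def using Dq_nonneg[OF fam] by (subst sum_ennreal) auto

lemma dp_lower:
  assumes fam: "F \<in> dist_family" and fo: "forced A F n" and dm: "dec_meas A F n"
  shows "ennreal (\<Sum>s=1..n. Dq F s) \<le> ALG A n F"
proof -
  have h: "Phi F n n \<le>
     (\<integral>\<^sup>+y. Cto A F n 1 (mg 1 w y) \<partial>PiM {1..n} (\<lambda>_. F))" for w
    using dp_lower_ind[OF fam fo dm, of n] by simp
  have "Phi F n n \<le> (\<integral>\<^sup>+y. Cto A F n 1 y \<partial>iid F n)"
    using h[of undefined] unfolding iid_def Cto_mg1 .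
  then show ?thesis using sum_Dq_ennreal[OF fam] ALG_eq_Cto[OF fam] by simp
qed


definition Pst :: "real measure \<Rightarrow> nat \<Rightarrow> nat \<Rightarrow> nat \<Rightarrow> real \<Rightarrow> bool" where
  "Pst F r k s x \<longleftrightarrow> (r - k + s - 1 = 0 \<or> x \<le> Dq F (r - k + s - 1))"

definition tcnt :: "real measure \<Rightarrow> nat \<Rightarrow> nat \<Rightarrow> real \<Rightarrow> nat" where
  "tcnt F r k x = card {s\<in>{1..k}. Pst F r k s x}"

definition Astar :: osdc_alg where
  "Astar F n i xs l = (if l + 1 = i then max 1 (tcnt F (Suc n - i) (n - l) (last xs))
                       else tcnt F (Suc n - i) (n - l) (last xs))"

lemma downclosed_eq:
  assumes "\<And>s s'. 1 \<le> s \<Longrightarrow> s \<le> s' \<Longrightarrow> s' \<le> k \<Longrightarrow> P s' \<Longrightarrow> P s"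
  shows "{s\<in>{1..k}. P s} = {1..card {s\<in>{1..k}. P s}}"
  using assms
proof (induction k)
  case 0 then show ?case by simp
next
  case (Suc k)
  show ?case
  proof (cases "P (Suc k)")
    case True
    then have "{s\<in>{1..Suc k}. P s} = {1..Suc k}" using Suc.prems by auto
    then show ?thesis by simp
  next
    case False
    then have e: "{s\<in>{1..Suc k}. P s} = {s\<in>{1..k}. P s}" by (auto simp: le_Suc_eq)
    have "{s\<in>{1..k}. P s} = {1..card {s\<in>{1..k}. P s}}"
      by (rule Suc.IH) (use Suc.prems in auto)
    then show ?thesis unfolding e .
  qed
qed

lemma Pst_down:
  assumes fam: "F \<in> dist_family"
  shows "1 \<le> s \<Longrightarrow> s \<le> s' \<Longrightarrow> s' \<le> k \<Longrightarrow> Pst F r k s' x \<Longrightarrow> Pst F r k s x"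
  unfolding Pst_def
proof -
  assume a: "1 \<le> s" "s \<le> s'" "s' \<le> k" and p: "r - k + s' - 1 = 0 \<or> x \<le> Dq F (r - k + s' - 1)"
  show "r - k + s - 1 = 0 \<or> x \<le> Dq F (r - k + s - 1)"
  proof (cases "r - k + s - 1 = 0")
    case False
    then have "r - k + s' - 1 \<noteq> 0" using a by linarith
    then have "x \<le> Dq F (r - k + s' - 1)" using p by simp
    also have "\<dots> \<le> Dq F (r - k + s - 1)"
      using False a by (intro Dq_dec'[OF fam]) auto
    finally show ?thesis by simp
  qed simp
qed

lemma tcnt_set:
  assumes fam: "F \<in> dist_family"
  shows "{s\<in>{1..k}. Pst F r k s x} = {1..tcnt F r k x}"
  unfolding tcnt_def by (rule downclosed_eq) (rule Pst_down[OF fam])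

lemma tcnt_le: "tcnt F r k x \<le> k"
  unfolding tcnt_def by (rule order.trans[OF card_mono[of "{1..k}"]]) auto

lemma tcnt_ge1:
  assumes "k = r" "1 \<le> k" shows "1 \<le> tcnt F r k x"
proof -
  have "1 \<in> {s\<in>{1..k}. Pst F r k s x}" using assms by (auto simp: Pst_def)
  then have "{s\<in>{1..k}. Pst F r k s x} \<noteq> {}" by blast
  then show ?thesis unfolding tcnt_def by (simp add: Suc_le_eq card_gt_0_iff)
qed

lemma psi_eq:
  assumes fam: "F \<in> dist_family" and kr: "k \<le> r" and x: "0 \<le> x"
  shows "psi F r k x = ennreal (real (tcnt F r k x) * x) + Phi F (r - 1) (k - tcnt F r k x)"
proof (cases "k = 0")
  case True
  then show ?thesis by (simp add: psi_def Phi_def tcnt_def)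
next
  case False
  define T where "T = tcnt F r k x"
  have Tk: "T \<le> k" unfolding T_def by (rule tcnt_le)
  have c: "k < r \<or> 1 \<le> T"
    using tcnt_ge1[of k r F x] False kr unfolding T_def by linarith
  have set: "{s\<in>{1..k}. Pst F r k s x} = {1..T}" unfolding T_def by (rule tcnt_set[OF fam])
  have 1: "(\<Sum>s=1..T. et F (r - k + s - 1) x) = ennreal (real T * x)"
  proof -
    have "(\<Sum>s=1..T. et F (r - k + s - 1) x) = (\<Sum>s=1..T. ennreal x)"
    proof (intro sum.cong refl)
      fix s assume s: "s \<in> {1..T}"
      then have "Pst F r k s x" using set by blast
      then show "et F (r - k + s - 1) x = ennreal x" by (auto simp: et_def Pst_def)
    qed
    also have "\<dots> = ennreal (real T * x)" by (simp add: ennreal_nat_mult)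
    finally show ?thesis .
  qed
  have 2: "(\<Sum>s=1..k-T. et F ((r - 1) - (k - T) + s) x) = Phi F (r - 1) (k - T)"
    unfolding Phi_def
  proof (intro sum.cong refl)
    fix s assume s: "s \<in> {1..k-T}"
    have e: "(r - 1) - (k - T) + s = r - k + (s + T) - 1" using s kr c Tk by auto
    have "s + T \<in> {1..k}" using s Tk by auto
    moreover have "s + T \<notin> {1..T}" using s by auto
    ultimately have "\<not> Pst F r k (s + T) x" using set by blast
    then show "et F ((r - 1) - (k - T) + s) x = ennreal (Dq F ((r - 1) - (k - T) + s))"
      unfolding e by (auto simp: et_def Pst_def)
  qed
  have "psi F r k x = ennreal (real T * x) + Phi F (r - 1) (k - T)"
    unfolding psi_split[OF Tk kr c] 1 2 ..
  then show ?thesis unfolding T_def .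
qed

lemma tcnt_meas: "tcnt F r k \<in> borel \<rightarrow>\<^sub>M count_space UNIV"
proof (subst measurable_count_space_eq2_countable, intro conjI ballI)
  fix a :: nat
  have "tcnt F r k -` {a} \<inter> space borel =
     {x. \<exists>B\<in>Pow {1..k}. card B = a \<and> (\<forall>s\<in>{1..k}. Pst F r k s x \<longleftrightarrow> s \<in> B)}"
  proof (intro set_eqI iffI)
    fix x assume "x \<in> tcnt F r k -` {a} \<inter> space borel"
    then show "x \<in> {x. \<exists>B\<in>Pow {1..k}. card B = a \<and> (\<forall>s\<in>{1..k}. Pst F r k s x \<longleftrightarrow> s \<in> B)}"
      by (intro CollectI bexI[of _ "{s\<in>{1..k}. Pst F r k s x}"]) (auto simp: tcnt_def)
  next
    fix x assume "x \<in> {x. \<exists>B\<in>Pow {1..k}. card B = a \<and> (\<forall>s\<in>{1..k}. Pst F r k s x \<longleftrightarrow> s \<in> B)}"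
    then obtain B where B: "B \<subseteq> {1..k}" "card B = a" "\<forall>s\<in>{1..k}. Pst F r k s x \<longleftrightarrow> s \<in> B" by auto
    then have "{s\<in>{1..k}. Pst F r k s x} = B" by auto
    then show "x \<in> tcnt F r k -` {a} \<inter> space borel" using B by (simp add: tcnt_def)
  qed
  also have "\<dots> \<in> sets borel"
    unfolding Pst_def by measurable
  finally show "tcnt F r k -` {a} \<inter> space borel \<in> sets borel" .
qed auto

lemma Astar_forced: "forced Astar F n"
  unfolding forced_def Astar_def by auto

lemma Astar_dec_meas: "dec_meas Astar F n"
  unfolding dec_meas_def
proof (intro allI)
  fix i l
  define g where "g x = (\<lambda>t. if l + 1 = i then max 1 t else t) (tcnt F (Suc n - i) (n - l) x)" for x
  have gm: "g \<in> borel \<rightarrow>\<^sub>M count_space UNIV"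
    unfolding g_def by (rule measurable_compose[OF tcnt_meas]) simp
  show "(\<lambda>w. Astar F n i (map w [1..<Suc i]) l) \<in> Om \<rightarrow>\<^sub>M count_space UNIV"
  proof (cases i)
    case 0 then show ?thesis by simp
  next
    case (Suc i')
    have "(\<lambda>w. Astar F n i (map w [1..<Suc i]) l) = (\<lambda>w. g (w i))"
      unfolding g_def Astar_def using Suc by (auto simp: fun_eq_iff last_map)
    then show ?thesis using measurable_compose[OF Om_comp gm] by simp
  qed
qed


lemma dp_upper_ind:
  assumes fam: "F \<in> dist_family"
  shows "k \<le> n \<Longrightarrow> 1 \<le> Suc n - k \<Longrightarrow> \<forall>w.
     (\<integral>\<^sup>+y. Cto Astar F n (Suc n - k) (mg (Suc n - k) w y) \<partial>PiM {Suc n - k..n} (\<lambda>_. F))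
     \<le> Phi F k (n - osdc_cov Astar F n w (n - k))"
proof (induction k)
  case 0
  show ?case
  proof
    fix w
    have "n \<le> osdc_cov Astar F n w n" by (rule cov_ge[OF Astar_forced])
    then show "(\<integral>\<^sup>+y. Cto Astar F n (Suc n - 0) (mg (Suc n - 0) w y) \<partial>PiM {Suc n - 0..n} (\<lambda>_. F))
       \<le> Phi F 0 (n - osdc_cov Astar F n w (n - 0))"
      by (simp add: Phi_def Cto_def)
  qed
next
  case (Suc k)
  define m where "m = n - k"
  have m: "1 \<le> m" "m \<le> n" "Suc n - Suc k = m" "Suc n - k = Suc m" "n - Suc k = m - 1" "n - k = m" "Suc n - m = Suc k"
    using Suc.prems unfolding m_def by auto
  have IH: "\<forall>w. (\<integral>\<^sup>+y. Cto Astar F n (Suc m) (mg (Suc m) w y) \<partial>PiM {Suc m..n} (\<lambda>_. F))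
      \<le> Phi F k (n - osdc_cov Astar F n w m)"
  proof -
    have "k \<le> n" "1 \<le> Suc n - k" using Suc.prems by auto
    from Suc.IH[OF this] show ?thesis by (simp only: m(4,6) simp_thms)
  qed
  show ?case
  proof
    fix w
    define c where "c = osdc_cov Astar F n w (m - 1)"
    define T where "T x = osdc_T Astar F n (w(m := x)) m" for x
    define inner where "inner x = (\<integral>\<^sup>+y. Cto Astar F n (Suc m) (mg (Suc m) (w(m := x)) y) \<partial>PiM {Suc m..n} (\<lambda>_. F))" for x
    have cge: "m - 1 \<le> c" unfolding c_def by (rule cov_ge[OF Astar_forced])
    have kr: "n - c \<le> Suc k" using cge m by linarith
    have covc: "osdc_cov Astar F n (w(m := x)) (m - 1) = c" for x
      unfolding c_def by (rule cov_local) auto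
    have cov_x: "osdc_cov Astar F n (w(m := x)) m = c + T x" for x
    proof -
      have "osdc_cov Astar F n (w(m := x)) m = osdc_cov Astar F n (w(m := x)) (m - 1) + osdc_T Astar F n (w(m := x)) m"
        using cov_Suc_T[of Astar F n "w(m := x)" "m - 1"] m by simp
      then show ?thesis unfolding covc T_def by simp
    qed
    have Tx: "T x = tcnt F (Suc k) (n - c) x" for x
    proof -
      have lst: "last (map (w(m := x)) [1..<Suc m]) = x"
        using m(1) by (simp add: last_map)
      have "T x = Astar F n m (map (w(m := x)) [1..<Suc m]) c"
        unfolding T_def osdc_T_def covc ..
      also have "\<dots> = tcnt F (Suc k) (n - c) x"
      proof (cases "c + 1 = m")
        case True
        then have "n - c = Suc k" using m by linarith
        then have "1 \<le> tcnt F (Suc k) (n - c) x" by (intro tcnt_ge1) auto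
        then show ?thesis unfolding Astar_def lst using True m by simp
      next
        case False
        then show ?thesis unfolding Astar_def lst using m by simp
      qed
      finally show ?thesis .
    qed
    have pt: "ennreal (real (T x) * x) + inner x \<le> psi F (Suc k) (n - c) x" if x: "0 \<le> x" for x
    proof -
      have "inner x \<le> Phi F (Suc k - 1) (n - c - T x)"
        using IH[rule_format, of "w(m := x)"] unfolding cov_x inner_def by (simp add: diff_diff_left)
      then have "ennreal (real (T x) * x) + inner x \<le> ennreal (real (T x) * x) + Phi F (Suc k - 1) (n - c - T x)"
        by (simp add: add_left_mono)
      also have "\<dots> = psi F (Suc k) (n - c) x"
        unfolding Tx by (rule psi_eq[OF fam kr x, symmetric])
      finally show ?thesis .
    qed
    have "(\<integral>\<^sup>+y. Cto Astar F n m (mg m w y) \<partial>PiM {m..n} (\<lambda>_. F)) = (\<integral>\<^sup>+x. ennreal (real (T x) * x) + inner x \<partial>F)"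
      unfolding T_def inner_def by (rule dp_step_eq[OF fam Astar_dec_meas m(1,2)])
    also have "\<dots> \<le> (\<integral>\<^sup>+x. psi F (Suc k) (n - c) x \<partial>F)"
      by (intro nn_integral_mono_AE) (use fam_D(2)[OF fam] pt in \<open>auto elim!: eventually_mono\<close>)
    also have "\<dots> = Phi F (Suc k) (n - c)"
      by (rule psi_int[OF fam kr])
    finally show "(\<integral>\<^sup>+y. Cto Astar F n (Suc n - Suc k) (mg (Suc n - Suc k) w y) \<partial>PiM {Suc n - Suc k..n} (\<lambda>_. F))
       \<le> Phi F (Suc k) (n - osdc_cov Astar F n w (n - Suc k))"
      using m by (simp add: c_def)
  qed
qed

lemma dp_upper:
  assumes fam: "F \<in> dist_family"
  shows "ALG Astar n F \<le> ennreal (\<Sum>s=1..n. Dq F s)"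
proof -
  have h: "(\<integral>\<^sup>+y. Cto Astar F n 1 (mg 1 w y) \<partial>PiM {1..n} (\<lambda>_. F)) \<le> Phi F n n" for w
    using dp_upper_ind[OF fam, of n n] by simp
  have "(\<integral>\<^sup>+y. Cto Astar F n 1 y \<partial>iid F n) \<le> Phi F n n"
    using h[of undefined] unfolding iid_def Cto_mg1 .
  then show ?thesis using sum_Dq_ennreal[OF fam] ALG_eq_Cto[OF fam] by simp
qed


abbreviation U :: "real measure" where "U \<equiv> restrict_space lborel {0<..<1}"

lemma U_prob: "prob_space U"
  by (rule prob_spaceI) (simp add: space_restrict_space emeasure_restrict_space)

lemma U_comp_meas: "j \<in> I \<Longrightarrow> (\<lambda>v. v j) \<in> borel_measurable (PiM I (\<lambda>_. U))"
proof -
  assume j: "j \<in> I"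
  have "(\<lambda>v. v j) \<in> PiM I (\<lambda>_. U) \<rightarrow>\<^sub>M U" using j by simp
  moreover have "(\<lambda>x. x) \<in> U \<rightarrow>\<^sub>M borel"
    by (rule measurable_restrict_space1) simp
  ultimately show ?thesis using measurable_compose by blast
qed

lemma Min_Suc_image:
  assumes "1 \<le> i" shows "Min (v ` {1..Suc i}) = min (v (Suc i)) (Min (v ` {1..i}))"
proof -
  have "{1..Suc i} = insert (Suc i) {1..i}" by auto
  then show ?thesis using assms by (simp add: Min_insert)
qed

lemma Vmeas:
  "1 \<le> (i::nat) \<Longrightarrow> i \<le> n \<Longrightarrow> (\<lambda>v. Min (v ` {1..i})) \<in> borel_measurable (PiM {1..n} (\<lambda>_. U))"
proof (induction i rule: dec_induct)
  case base then show ?case using U_comp_meas[of 1 "{1..n}"] by simp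
next
  case (step i)
  have "(\<lambda>v. min (v (Suc i)) (Min (v ` {1..i}))) \<in> borel_measurable (PiM {1..n} (\<lambda>_. U))"
    using U_comp_meas[of "Suc i" "{1..n}"] step by (intro borel_measurable_min) auto
  then show ?case unfolding Min_Suc_image[OF step(1)] .
qed

lemma ftc_pow:
  assumes "0 \<le> a" "a \<le> 1" "1 \<le> i"
  shows "((\<lambda>u. real i * (1 - u) ^ (i - 1)) has_integral (1 - a) ^ i) {a<..<1}"
proof -
  have "((\<lambda>u. real i * (1 - u) ^ (i - 1)) has_integral ((\<lambda>u. - ((1 - u) ^ i)) 1 - (\<lambda>u. - ((1 - u) ^ i)) a)) {a..1}"
  proof (rule fundamental_theorem_of_calculus)
    fix x :: real
    have "((\<lambda>u. - ((1 - u) ^ i)) has_real_derivative (real i * (1 - x) ^ (i - 1))) (at x within {a..1})"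
      by (auto intro!: derivative_eq_intros)
    then show "((\<lambda>u. - ((1 - u) ^ i)) has_vector_derivative real i * (1 - x) ^ (i - 1)) (at x within {a..1})"
      by (simp add: has_real_derivative_iff_has_vector_derivative)
  qed (use assms in auto)
  then have "((\<lambda>u. real i * (1 - u) ^ (i - 1)) has_integral (1 - a) ^ i) {a..1}"
    using assms by (simp add: zero_power)
  moreover have "box a 1 = {a<..<1::real}" "cbox a 1 = {a..1::real}" by (auto simp: box_def cbox_def)
  ultimately show ?thesis
    using has_integral_open_interval[of "\<lambda>u. real i * (1 - u) ^ (i - 1)" "(1 - a) ^ i" a 1] by simp
qed

lemma Vdist:
  assumes i: "1 \<le> i" "i \<le> n"
  shows "distr (PiM {1..n} (\<lambda>_. U)) borel (\<lambda>v. Min (v ` {1..i})) =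
    density lborel (\<lambda>u. ennreal (indicator {0<..<1} u * (real i * (1 - u) ^ (i - 1))))"
    (is "?L = ?R")
proof (rule measure_eqI_lessThan)
  interpret P: prob_space "PiM {1..n} (\<lambda>_. U)"
    by (rule prob_space_PiM) (simp add: U_prob)
  have vm: "(\<lambda>v. Min (v ` {1..i})) \<in> borel_measurable (PiM {1..n} (\<lambda>_. U))"
    by (rule Vmeas[OF i])
  interpret L: prob_space ?L by (rule P.prob_space_distr[OF vm])
  show "sets ?L = sets borel" by simp
  show "sets ?R = sets borel" by simp
  fix x :: real
  show "emeasure ?L {x<..} < \<infinity>" using L.emeasure_finite[of "{x<..}"] by (simp add: less_top)
  define a where "a = max 0 x"
  have set_eq: "(\<lambda>v. Min (v ` {1..i})) -` {x<..} \<inter> space (PiM {1..n} (\<lambda>_. U)) =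
      prod_emb {1..n} (\<lambda>_. U) {1..i} (PiE {1..i} (\<lambda>_. {x<..} \<inter> {0<..<1}))"
  proof -
    have "Min (v ` {1..i}) > x \<longleftrightarrow> (\<forall>j\<in>{1..i}. x < v j)" for v
      using i by (subst Min_gr_iff) auto
    moreover have "v \<in> space (PiM {1..n} (\<lambda>_. U)) \<Longrightarrow> j \<in> {1..i} \<Longrightarrow> v j \<in> {0<..<1}" for v j
      using i by (auto simp: space_PiM space_restrict_space PiE_iff)
    ultimately show ?thesis
      unfolding prod_emb_def using i
      by (auto simp: space_PiM space_restrict_space PiE_iff restrict_def)
  qed
  have "emeasure ?L {x<..} = emeasure (PiM {1..n} (\<lambda>_. U)) (prod_emb {1..n} (\<lambda>_. U) {1..i} (PiE {1..i} (\<lambda>_. {x<..} \<inter> {0<..<1})))"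
  proof -
    have "emeasure ?L {x<..} = emeasure (PiM {1..n} (\<lambda>_. U)) ((\<lambda>v. Min (v ` {1..i})) -` {x<..} \<inter> space (PiM {1..n} (\<lambda>_. U)))"
      by (rule emeasure_distr[OF vm]) simp
    then show ?thesis unfolding set_eq .
  qed
  also have "\<dots> = (\<Prod>j\<in>{1..i}. emeasure U ({x<..} \<inter> {0<..<1}))"
    using i by (intro emeasure_PiM_emb) (auto simp: U_prob sets_restrict_space)
  also have "\<dots> = emeasure U ({x<..} \<inter> {0<..<1}) ^ i" by simp
  also have "emeasure U ({x<..} \<inter> {0<..<1}) = emeasure lborel ({x<..} \<inter> {0<..<1})"
    by (rule emeasure_restrict_space) auto
  finally have L: "emeasure ?L {x<..} = emeasure lborel ({x<..} \<inter> {0<..<1}) ^ i" .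
  show "emeasure ?L {x<..} = emeasure ?R {x<..}"
  proof (cases "x < 1")
    case True
    have e1: "{x<..} \<inter> {0<..<1} = {a<..<1}" unfolding a_def by auto
    have a01: "0 \<le> a" "a \<le> 1" using True unfolding a_def by auto
    have "emeasure ?R {x<..} = (\<integral>\<^sup>+u. ennreal (indicator {0<..<1} u * (real i * (1 - u) ^ (i - 1))) * indicator {x<..} u \<partial>lborel)"
      by (subst emeasure_density) auto
    also have "\<dots> = (\<integral>\<^sup>+u. ennreal (indicator {a<..<1} u * (real i * (1 - u) ^ (i - 1))) \<partial>lborel)"
      by (intro nn_integral_cong) (auto simp: indicator_def a_def)
    also have "\<dots> = ennreal ((1 - a) ^ i)"
      by (rule nn_integral_has_integral_lebesgue[OF _ ftc_pow[OF a01 i(1)]]) auto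
    finally show ?thesis using L e1 a01 by (simp add: ennreal_power)
  next
    case False
    have e1: "{x<..} \<inter> {0<..<1} = {}" using False by auto
    have "emeasure ?R {x<..} = (\<integral>\<^sup>+u. ennreal (indicator {0<..<1} u * (real i * (1 - u) ^ (i - 1))) * indicator {x<..} u \<partial>lborel)"
      by (subst emeasure_density) auto
    also have "\<dots> = (\<integral>\<^sup>+u. 0 \<partial>lborel)"
    proof -
      have "(\<lambda>u. ennreal (indicator {0<..<1} u * (real i * (1 - u) ^ (i - 1))) * indicator {x<..} u) = (\<lambda>u. 0)"
        using False by (auto simp: indicator_def fun_eq_iff)
      then show ?thesis by simp
    qed
    finally show ?thesis using L e1 i by (simp add: zero_power)
  qed
qed


lemma VmeasG:
  fixes N :: "(nat \<Rightarrow> real) measure"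
  assumes "\<And>j. j \<in> {1..n} \<Longrightarrow> (\<lambda>v. v j) \<in> borel_measurable N"
  shows "1 \<le> (i::nat) \<Longrightarrow> i \<le> n \<Longrightarrow> (\<lambda>v. Min (v ` {1..i})) \<in> borel_measurable N"
proof (induction i rule: dec_induct)
  case base then show ?case using assms[of 1] by simp
next
  case (step i)
  have "(\<lambda>v. min (v (Suc i)) (Min (v ` {1..i}))) \<in> borel_measurable N"
    by (intro borel_measurable_min) (use assms[of "Suc i"] step in auto)
  then show ?case unfolding Min_Suc_image[OF step(1)] .
qed

lemma mono_on_Min_image:
  assumes "mono_on S g" "finite A" "A \<noteq> {}" "A \<subseteq> S"
  shows "Min (g ` A) = g (Min A)"
  using assms(2,3,4)
proof (induction A rule: finite_ne_induct)
  case (singleton x) then show ?case by simp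
next
  case (insert x A)
  have "Min (g ` insert x A) = min (g x) (g (Min A))"
    using insert by simp
  also have "\<dots> = g (min x (Min A))"
  proof -
    have "Min A \<in> A" using insert.hyps by simp
    then have "Min A \<in> S" using insert.prems by auto
    moreover have "x \<in> S" using insert by auto
    ultimately show ?thesis using assms(1)
      by (cases "x \<le> Min A") (auto simp: min_def dest: mono_onD)
  qed
  finally show ?case using insert by simp
qed

lemma g_meas_U:
  fixes g :: "real \<Rightarrow> real"
  assumes "mono_on {0<..<1} g"
  shows "g \<in> borel_measurable U"
proof -
  have "g \<in> borel_measurable (restrict_space borel {0<..<1})"
    by (rule borel_measurable_mono_on_fnc[OF assms])
  moreover have "sets (restrict_space borel {0<..<1::real}) = sets U"
    by (simp add: sets_restrict_space)
  ultimately show ?thesis using measurable_cong_sets by blast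
qed

lemma distrU_real:
  fixes g :: "real \<Rightarrow> real"
  assumes "mono_on {0<..<1} g"
  shows "real_distribution (distr U borel g)"
proof -
  interpret prob_space U by (rule U_prob)
  show ?thesis
    by (auto simp: real_distribution_def real_distribution_axioms_def intro!: prob_space_distr g_meas_U[OF assms])
qed

lemma iid_distrU:
  fixes g :: "real \<Rightarrow> real"
  assumes g: "mono_on {0<..<1} g"
  shows "iid (distr U borel g) n = distr (PiM {1..n} (\<lambda>_. U)) (PiM {1..n} (\<lambda>_. distr U borel g)) (\<lambda>v. compose {1..n} g v)"
proof -
  let ?F = "distr U borel g"
  interpret F: real_distribution ?F by (rule distrU_real[OF g])
  have gF: "g \<in> U \<rightarrow>\<^sub>M ?F"
    using g_meas_U[OF g] measurable_cong_sets[OF refl F.events_eq_borel] by blast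
  have "distr (PiM {1..n} (\<lambda>_. U)) (PiM {1..n} (\<lambda>_. ?F)) (compose {1..n} g) = PiM {1..n} (\<lambda>i. distr U ?F g)"
    by (rule distr_PiM_finite_prob_space') (auto simp: U_prob F.prob_space_axioms gF g_meas_U[OF g])
  also have "distr U ?F g = ?F"
    by (rule distr_cong) auto
  finally show ?thesis unfolding iid_def using g_meas_U[OF g] by simp
qed

lemma G_meas:
  fixes g :: "real \<Rightarrow> real"
  assumes g: "mono_on {0<..<1} g"
  shows "(\<lambda>u. ennreal (indicator {0<..<1} u *\<^sub>R g u)) \<in> borel_measurable borel"
proof -
  have "g \<in> borel_measurable (restrict_space borel {0<..<1})"
    by (rule borel_measurable_mono_on_fnc[OF g])
  then have "(\<lambda>u. indicator {0<..<1} u *\<^sub>R g u) \<in> borel_measurable borel"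
    by (subst (asm) borel_measurable_restrict_space_iff) auto
  then show ?thesis by measurable
qed

lemma OPT_distrU:
  fixes g :: "real \<Rightarrow> real"
  assumes g: "mono_on {0<..<1} g" and gnn: "\<And>u. u \<in> {0<..<1} \<Longrightarrow> 0 \<le> g u"
  shows "OPT n (distr U borel g) = (\<integral>\<^sup>+u. ennreal (g u * Pn' n (1 - u)) \<partial>U)"
proof -
  let ?F = "distr U borel g"
  let ?PU = "PiM {1..n} (\<lambda>_. U)"
  let ?PF = "PiM {1..n} (\<lambda>_. ?F)"
  define G where "G u = ennreal (indicator {0<..<1} u *\<^sub>R g u)" for u
  define w where "w i u = ennreal (indicator {0<..<1} u * (real i * (1 - u) ^ (i - 1)))" for i u
  interpret F: real_distribution ?F by (rule distrU_real[OF g])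
  have Gm: "G \<in> borel_measurable borel" unfolding G_def by (rule G_meas[OF g])
  have wm: "w i \<in> borel_measurable borel" for i unfolding w_def by measurable
  have gF: "g \<in> U \<rightarrow>\<^sub>M ?F"
    using g_meas_U[OF g] measurable_cong_sets[OF refl F.events_eq_borel] by blast
  have cmeas: "(\<lambda>v. compose {1..n} g v) \<in> ?PU \<rightarrow>\<^sub>M ?PF"
  proof -
    have "(\<lambda>v j. (\<lambda>j v. compose {1..n} g v j) j v) \<in> ?PU \<rightarrow>\<^sub>M ?PF"
    proof (rule measurable_PiM_single')
      fix j assume j: "j \<in> {1..n}"
      have "(\<lambda>v. g (v j)) \<in> ?PU \<rightarrow>\<^sub>M ?F"
        using measurable_compose[OF measurable_component_singleton[OF j] gF] by simp
      then show "(\<lambda>v. compose {1..n} g v j) \<in> ?PU \<rightarrow>\<^sub>M ?F"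
        using j by (simp add: compose_def)
    qed (auto simp: compose_def)
    then show ?thesis by simp
  qed
  have compF: "j \<in> {1..n} \<Longrightarrow> (\<lambda>v. v j) \<in> borel_measurable ?PF" for j
    using measurable_cong_sets[OF refl F.events_eq_borel] measurable_component_singleton[of j "{1..n}" "\<lambda>_. ?F"] by blast
  have fm: "(\<lambda>w. ennreal (\<Sum>i=1..n. Min (w ` {1..i}))) \<in> borel_measurable ?PF"
    using VmeasG[OF compF] by measurable
  have Vm: "1 \<le> i \<Longrightarrow> i \<le> n \<Longrightarrow> (\<lambda>v. Min (v ` {1..i})) \<in> borel_measurable ?PU" for i
    by (rule Vmeas)
  have "OPT n ?F = (\<integral>\<^sup>+w. ennreal (\<Sum>i=1..n. Min (w ` {1..i})) \<partial>distr ?PU ?PF (\<lambda>v. compose {1..n} g v))"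
    unfolding OPT_def iid_distrU[OF g] ..
  also have "\<dots> = (\<integral>\<^sup>+v. ennreal (\<Sum>i=1..n. Min (compose {1..n} g v ` {1..i})) \<partial>?PU)"
    by (rule nn_integral_distr[OF cmeas]) (use fm in simp)
  also have "\<dots> = (\<integral>\<^sup>+v. (\<Sum>i=1..n. G (Min (v ` {1..i}))) \<partial>?PU)"
  proof (intro nn_integral_cong)
    fix v assume v: "v \<in> space ?PU"
    then have vj: "j \<in> {1..n} \<Longrightarrow> v j \<in> {0<..<1}" for j
      by (auto simp: space_PiM space_restrict_space PiE_iff)
    have mi: "i \<in> {1..n} \<Longrightarrow> Min (v ` {1..i}) \<in> {0<..<1}" for i
    proof -
      assume i: "i \<in> {1..n}"
      have "Min (v ` {1..i}) \<in> v ` {1..i}" using i by (intro Min_in) auto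
      then obtain j where "j \<in> {1..i}" "Min (v ` {1..i}) = v j" by auto
      then show ?thesis using vj[of j] i by auto
    qed
    have e: "i \<in> {1..n} \<Longrightarrow> Min (compose {1..n} g v ` {1..i}) = g (Min (v ` {1..i}))" for i
    proof -
      assume i: "i \<in> {1..n}"
      have "compose {1..n} g v ` {1..i} = g ` (v ` {1..i})"
        using i by (auto simp: compose_def image_image)
      also have "Min \<dots> = g (Min (v ` {1..i}))"
        by (rule mono_on_Min_image[OF g]) (use i vj in auto)
      finally show ?thesis .
    qed
    have "ennreal (\<Sum>i=1..n. Min (compose {1..n} g v ` {1..i})) = ennreal (\<Sum>i=1..n. g (Min (v ` {1..i})))"
      using e by (intro arg_cong[where f=ennreal] sum.cong) auto
    also have "\<dots> = (\<Sum>i=1..n. ennreal (g (Min (v ` {1..i}))))"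
      using mi gnn by (intro sum_ennreal[symmetric]) auto
    also have "\<dots> = (\<Sum>i=1..n. G (Min (v ` {1..i})))"
      using mi by (intro sum.cong refl) (auto simp: G_def)
    finally show "ennreal (\<Sum>i=1..n. Min (compose {1..n} g v ` {1..i})) = (\<Sum>i=1..n. G (Min (v ` {1..i})))" .
  qed
  also have "\<dots> = (\<Sum>i=1..n. \<integral>\<^sup>+v. G (Min (v ` {1..i})) \<partial>?PU)"
    by (intro nn_integral_sum) (use Vm Gm in auto)
  also have "\<dots> = (\<Sum>i=1..n. \<integral>\<^sup>+u. w i u * G u \<partial>lborel)"
  proof (intro sum.cong refl)
    fix i assume i: "i \<in> {1..n}"
    have "(\<integral>\<^sup>+v. G (Min (v ` {1..i})) \<partial>?PU) = (\<integral>\<^sup>+u. G u \<partial>distr ?PU borel (\<lambda>v. Min (v ` {1..i})))"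
      by (rule nn_integral_distr[symmetric]) (use Vm i Gm in auto)
    also have "\<dots> = (\<integral>\<^sup>+u. G u \<partial>density lborel (w i))"
      unfolding w_def using i by (subst Vdist) auto
    also have "\<dots> = (\<integral>\<^sup>+u. w i u * G u \<partial>lborel)"
      by (rule nn_integral_density) (use Gm wm in auto)
    finally show "(\<integral>\<^sup>+v. G (Min (v ` {1..i})) \<partial>?PU) = (\<integral>\<^sup>+u. w i u * G u \<partial>lborel)" .
  qed
  also have "\<dots> = (\<integral>\<^sup>+u. (\<Sum>i=1..n. w i u * G u) \<partial>lborel)"
    by (rule nn_integral_sum[symmetric]) (use Gm wm in auto)
  also have "\<dots> = (\<integral>\<^sup>+u. ennreal (g u * Pn' n (1 - u)) * indicator {0<..<1} u \<partial>lborel)"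
  proof (intro nn_integral_cong)
    fix u :: real
    show "(\<Sum>i=1..n. w i u * G u) = ennreal (g u * Pn' n (1 - u)) * indicator {0<..<1} u"
    proof (cases "u \<in> {0<..<1}")
      case True
      have "(\<Sum>i=1..n. w i u * G u) = (\<Sum>i=1..n. ennreal (g u * (real i * (1 - u) ^ (i - 1))))"
        using True gnn[OF True]
        by (intro sum.cong refl) (auto simp: w_def G_def ennreal_mult[symmetric] mult.commute)
      also have "\<dots> = ennreal (\<Sum>i=1..n. g u * (real i * (1 - u) ^ (i - 1)))"
        using True gnn[OF True] by (intro sum_ennreal) auto
      also have "\<dots> = ennreal (g u * Pn' n (1 - u))"
        by (simp add: Pn'_def sum_distrib_left)
      finally show ?thesis using True by simp
    next
      case False
      then show ?thesis by (simp add: w_def G_def)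
    qed
  qed
  also have "\<dots> = (\<integral>\<^sup>+u. ennreal (g u * Pn' n (1 - u)) \<partial>U)"
    by (subst nn_integral_restrict_space) auto
  finally show ?thesis .
qed


lemma LU_HK:
  fixes \<phi> :: "real \<Rightarrow> real"
  assumes m: "\<phi> \<in> borel_measurable U" and b: "\<And>u. u \<in> {0<..<1} \<Longrightarrow> \<bar>\<phi> u\<bar> \<le> B"
  shows "integrable U \<phi>" "integral\<^sup>L U \<phi> = integral {0..1} \<phi>" "\<phi> integrable_on {0..1}"
proof -
  have m': "(\<lambda>x. indicator {0<..<1} x *\<^sub>R \<phi> x) \<in> borel_measurable lborel"
    using m by (subst (asm) borel_measurable_restrict_space_iff) auto
  have si: "set_integrable lborel {0<..<1} \<phi>"
    unfolding set_integrable_def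
  proof (rule integrableI_bounded_set[where A="{0<..<1}" and B=B])
    show "(\<lambda>x. indicator {0<..<1} x *\<^sub>R \<phi> x) \<in> borel_measurable lborel" by (rule m')
  qed (use b in \<open>auto simp: indicator_def\<close>)
  show "integrable U \<phi>"
    using si unfolding set_integrable_def by (subst integrable_restrict_space) auto
  have "integral\<^sup>L U \<phi> = set_lebesgue_integral lborel {0<..<1} \<phi>"
    unfolding set_lebesgue_integral_def by (subst integral_restrict_space) auto
  also have "\<dots> = integral {0<..<1} \<phi>" by (rule set_borel_integral_eq_integral(2)[OF si])
  also have "\<dots> = integral {0..1} \<phi>" by (rule integral_open_interval_real[symmetric])
  finally show "integral\<^sup>L U \<phi> = integral {0..1} \<phi>" .
  have "\<phi> integrable_on {0<..<1}" by (rule set_borel_integral_eq_integral(1)[OF si])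
  moreover have "box 0 1 = {0<..<1::real}" "cbox 0 1 = {0..1::real}" by (auto simp: box_def cbox_def)
  ultimately show "\<phi> integrable_on {0..1}"
    using has_integral_open_interval[of \<phi> _ 0 1] unfolding integrable_on_def by auto
qed

lemma NU_HK:
  fixes \<phi> :: "real \<Rightarrow> real"
  assumes m: "\<phi> \<in> borel_measurable U" and b: "\<And>u. u \<in> {0<..<1} \<Longrightarrow> \<bar>\<phi> u\<bar> \<le> B"
    and nn: "\<And>u. u \<in> {0<..<1} \<Longrightarrow> 0 \<le> \<phi> u"
  shows "(\<integral>\<^sup>+u. ennreal (\<phi> u) \<partial>U) = ennreal (integral {0..1} \<phi>)"
proof -
  have "(\<integral>\<^sup>+u. ennreal (\<phi> u) \<partial>U) = ennreal (integral\<^sup>L U \<phi>)"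
    by (rule nn_integral_eq_integral[OF LU_HK(1)[OF m b]]) (use nn in \<open>auto simp: space_restrict_space\<close>)
  then show ?thesis using LU_HK(2)[OF m b] by simp
qed

lemma EF_HK:
  fixes g f :: "real \<Rightarrow> real"
  assumes g: "mono_on {0<..<1} g" and f: "f \<in> borel_measurable borel"
    and b: "\<And>u. u \<in> {0<..<1} \<Longrightarrow> \<bar>f (g u)\<bar> \<le> B"
  shows "integral\<^sup>L (distr U borel g) f = integral {0..1} (\<lambda>u. f (g u))"
    "(\<lambda>u. f (g u)) integrable_on {0..1}"
proof -
  have fg: "(\<lambda>u. f (g u)) \<in> borel_measurable U"
    using measurable_compose[OF g_meas_U[OF g] f] by (simp add: comp_def)
  show "integral\<^sup>L (distr U borel g) f = integral {0..1} (\<lambda>u. f (g u))"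
    using LU_HK(2)[OF fg b] integral_distr[OF g_meas_U[OF g] f] by simp
  show "(\<lambda>u. f (g u)) integrable_on {0..1}" by (rule LU_HK(3)[OF fg b])
qed

lemma distrU_fam:
  fixes g :: "real \<Rightarrow> real"
  assumes g: "mono_on {0<..<1} g" and nn: "\<And>u. u \<in> {0<..<1} \<Longrightarrow> 0 \<le> g u"
    and int: "integrable U g"
  shows "distr U borel g \<in> dist_family"
proof -
  have "AE x in distr U borel g. 0 \<le> x"
    by (subst AE_distr_iff[OF g_meas_U[OF g]]) (auto simp: space_restrict_space nn intro!: AE_I2)
  moreover have "integrable (distr U borel g) (\<lambda>x. x)"
    by (subst integrable_distr_eq[OF g_meas_U[OF g]]) (auto simp: int)
  ultimately show ?thesis unfolding dist_family_def using distrU_real[OF g] by auto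
qed

definition snapA :: "real set \<Rightarrow> real \<Rightarrow> osdc_alg \<Rightarrow> osdc_alg" where
  "snapA S s0 A = (\<lambda>F n i xs l. A F n i (map (\<lambda>x. if x \<in> S then x else s0) xs) l)"

lemma snap_cov:
  assumes "\<forall>j\<in>{1..n}. w j \<in> S"
  shows "i \<le> n \<Longrightarrow> osdc_cov (snapA S s0 A) F n w i = osdc_cov A F n w i"
proof (induction i)
  case 0 then show ?case by simp
next
  case (Suc i)
  have "map (\<lambda>x. if x \<in> S then x else s0) (map w [1..<Suc (Suc i)]) = map w [1..<Suc (Suc i)]"
    using assms Suc.prems by (auto simp: map_idI)
  then show ?case using Suc by (simp only: osdc_cov.simps snapA_def)
qed

lemma snap_cost:
  assumes "\<forall>j\<in>{1..n}. w j \<in> S"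
  shows "osdc_cost (snapA S s0 A) F n w = osdc_cost A F n w"
  unfolding osdc_cost_def
proof (intro sum.cong refl)
  fix j assume j: "j \<in> {1..n}"
  have "map (\<lambda>x. if x \<in> S then x else s0) (map w [1..<Suc j]) = map w [1..<Suc j]"
    using assms j by (auto simp: map_idI)
  moreover have "osdc_cov (snapA S s0 A) F n w (j - 1) = osdc_cov A F n w (j - 1)"
    using snap_cov[OF assms] j by auto
  ultimately have "osdc_T (snapA S s0 A) F n w j = osdc_T A F n w j"
    unfolding osdc_T_def by (simp only: snapA_def)
  then show "real (osdc_T (snapA S s0 A) F n w j) * w j = real (osdc_T A F n w j) * w j"
    by simp
qed

lemma snap_lower:
  assumes fam: "F \<in> dist_family" and adm: "admissible n A" and S: "finite S" "s0 \<in> S"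
    and AS: "AE x in F. x \<in> S"
  shows "ennreal (\<Sum>s=1..n. Dq F s) \<le> ALG A n F"
proof -
  interpret F: real_distribution F using fam_D[OF fam] by simp
  let ?sn = "\<lambda>x::real. if x \<in> S then x else s0"
  let ?A' = "snapA S s0 A"
  have fo: "forced ?A' F n"
    using adm unfolding admissible_def forced_def snapA_def by blast
  have Sb: "S \<in> sets borel" using S(1) by (simp add: finite_imp_closed)
  have snm: "?sn \<in> borel_measurable borel" using Sb by measurable
  have dm: "dec_meas ?A' F n"
    unfolding dec_meas_def
  proof (intro allI)
    fix i l
    let ?LS = "{ys. set ys \<subseteq> S \<and> length ys = i}"
    let ?g = "\<lambda>w::nat\<Rightarrow>real. map (\<lambda>j. ?sn (w j)) [1..<Suc i]"
    have gm: "?g \<in> Om \<rightarrow>\<^sub>M count_space ?LS"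
    proof (subst measurable_count_space_eq2, use S in \<open>simp add: finite_lists_length_eq\<close>, intro conjI ballI)
      have sn: "?sn x \<in> S" for x using S(2) by simp
      show "?g \<in> space Om \<rightarrow> ?LS" using sn S(2) by auto
      fix ys assume ys: "ys \<in> ?LS"
      have "?g -` {ys} \<inter> space Om = {w \<in> space Om. \<forall>k\<in>{..<i}. ?sn (w (Suc k)) = ys ! k}"
      proof -
        have "?g w = ys \<longleftrightarrow> (\<forall>k\<in>{..<i}. ?sn (w (Suc k)) = ys ! k)" for w
          using ys by (simp del: upt_Suc add: list_eq_iff_nth_eq) blast
        then show ?thesis by blast
      qed
      also have "\<dots> \<in> sets Om"
        using snm by measurable
      finally show "?g -` {ys} \<inter> space Om \<in> sets Om" .
    qed
    have "(\<lambda>w. (\<lambda>ys w. A F n i ys l) (?g w) w) \<in> Om \<rightarrow>\<^sub>M count_space UNIV"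
      by (rule measurable_compose_countable'[OF _ gm]) (auto intro: countable_finite finite_lists_length_eq S)
    then show "(\<lambda>w. ?A' F n i (map w [1..<Suc i]) l) \<in> Om \<rightarrow>\<^sub>M count_space UNIV"
      by (simp del: upt_Suc add: snapA_def comp_def)
  qed
  have "ennreal (\<Sum>s=1..n. Dq F s) \<le> ALG ?A' n F" by (rule dp_lower[OF fam fo dm])
  also have "ALG ?A' n F = ALG A n F"
    unfolding ALG_def
  proof (rule nn_integral_cong_AE)
    have "AE w in iid F n. \<forall>j\<in>{1..n}. w j \<in> S"
      unfolding iid_def
      by (intro eventually_ball_finite ballI AE_PiM_component) (auto simp: F.prob_space_axioms AS)
    then show "AE w in iid F n. ennreal (osdc_cost ?A' F n w) = ennreal (osdc_cost A F n w)"
      by eventually_elim (simp add: snap_cost)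
  qed
  finally show ?thesis .
qed


lemma mono_int:
  fixes f :: "real \<Rightarrow> real"
  assumes "mono_on {0..1} f" "0 \<le> a" "b \<le> 1"
  shows "f integrable_on {a..b}"
  by (rule integrable_on_mono_on) (rule mono_on_subset[OF assms(1)], use assms in auto)

lemma mono_min:
  fixes f :: "real \<Rightarrow> real"
  assumes "mono_on S f" shows "mono_on S (\<lambda>u. min (f u) c)"
proof (rule mono_onI)
  fix r s assume "r \<in> S" "s \<in> S" "r \<le> s"
  then have "f r \<le> f s" by (rule mono_onD[OF assms])
  then show "min (f r) c \<le> min (f s) c" by (rule min.mono) simp
qed

lemma q_lemma:
  fixes h :: "real \<Rightarrow> real"
  assumes h: "mono_on {0..1} h"
  shows "\<exists>q\<in>{0..1}. integral {0..q} h + (1 - q) * c \<le> integral {0..1} (\<lambda>u. min (h u) c)"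
proof -
  define P where "P = {u\<in>{0..1}. h u < c}"
  define q where "q = (if P = {} then 0 else Sup P)"
  have bdd: "bdd_above P" unfolding P_def by (auto intro: bdd_aboveI[of _ 1])
  have q01: "q \<in> {0..1}"
  proof (cases "P = {}")
    case False
    then obtain x where x: "x \<in> P" by auto
    have "x \<le> Sup P" by (rule cSup_upper[OF x bdd])
    moreover have "Sup P \<le> 1" using False by (intro cSup_least) (auto simp: P_def)
    ultimately show ?thesis using x False by (auto simp: q_def P_def)
  qed (simp add: q_def)
  have lt: "h u < c" if u: "u \<in> {0..1}" "u < q" for u
  proof -
    have "P \<noteq> {}" using u by (auto simp: q_def split: if_splits)
    then have "u < Sup P" using u by (simp add: q_def)
    then obtain x where x: "x \<in> P" "u < x" using less_cSupE[OF _ \<open>P \<noteq> {}\<close>] by blast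
    then have "h u \<le> h x" using u h by (auto simp: P_def intro: mono_onD)
    then show ?thesis using x by (auto simp: P_def)
  qed
  have gt: "c \<le> h u" if u: "u \<in> {0..1}" "q < u" for u
  proof (rule ccontr)
    assume "\<not> c \<le> h u"
    then have "u \<in> P" using u by (auto simp: P_def)
    then have "u \<le> Sup P" by (rule cSup_upper[OF _ bdd])
    moreover have "P \<noteq> {}" using \<open>u \<in> P\<close> by auto
    ultimately show False using u by (simp add: q_def)
  qed
  have mi: "mono_on {0..1} (\<lambda>u. min (h u) c)" by (rule mono_min[OF h])
  have "integral {0..1} (\<lambda>u. min (h u) c) = integral {0..q} (\<lambda>u. min (h u) c) + integral {q..1} (\<lambda>u. min (h u) c)"
    using q01 by (intro Henstock_Kurzweil_Integration.integral_combine[symmetric] mono_int[OF mi]) auto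
  also have "integral {0..q} (\<lambda>u. min (h u) c) = integral {0..q} h"
    by (rule integral_spike[of "{q}"]) (use lt q01 in auto)
  also have "integral {q..1} (\<lambda>u. min (h u) c) = integral {q..1} (\<lambda>u. c)"
  proof (rule integral_spike[of "{q}"])
    fix x assume "x \<in> {q..1} - {q}"
    then have "x \<in> {0..1}" "q < x" using q01 by auto
    then have "c \<le> h x" by (rule gt)
    then show "(\<lambda>u. c) x = min (h x) c" by simp
  qed simp
  also have "\<dots> = (1 - q) * c" using q01 by simp
  finally show ?thesis using q01 by auto
qed

definition hm :: "(real \<Rightarrow> real) \<Rightarrow> nat \<Rightarrow> real \<Rightarrow> real" where
  "hm h m u = h (of_int \<lfloor>real m * u\<rfloor> / real m)"

lemma fl_props:
  assumes m: "1 \<le> m" and u: "u \<in> {0..1}"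
  shows "0 \<le> of_int \<lfloor>real m * u\<rfloor> / real m" "of_int \<lfloor>real m * u\<rfloor> / real m \<le> u"
    "u - 1 / real m \<le> of_int \<lfloor>real m * u\<rfloor> / real m"
proof -
  have mp: "0 < real m" using m by simp
  show "0 \<le> of_int \<lfloor>real m * u\<rfloor> / real m" using u mp by auto
  have "of_int \<lfloor>real m * u\<rfloor> \<le> real m * u" by simp
  then show "of_int \<lfloor>real m * u\<rfloor> / real m \<le> u" using mp by (simp add: divide_le_eq mult.commute)
  have "real m * u - 1 \<le> of_int \<lfloor>real m * u\<rfloor>" by linarith
  then have "(real m * u - 1) / real m \<le> of_int \<lfloor>real m * u\<rfloor> / real m"
    using mp by (intro divide_right_mono) auto
  moreover have "(real m * u - 1) / real m = u - 1 / real m" using mp by (simp add: field_simps)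
  ultimately show "u - 1 / real m \<le> of_int \<lfloor>real m * u\<rfloor> / real m" by simp
qed

lemma fl_mono:
  assumes "1 \<le> m" "u \<le> v" shows "of_int \<lfloor>real m * u\<rfloor> / real m \<le> of_int \<lfloor>real m * v\<rfloor> / real m"
  using assms by (intro divide_right_mono) (auto intro!: floor_mono mult_left_mono)

lemma hm_props:
  fixes h :: "real \<Rightarrow> real"
  assumes h: "mono_on {0..1} h" and m: "1 \<le> m"
  shows "mono_on {0..1} (hm h m)" "\<And>u. u \<in> {0..1} \<Longrightarrow> hm h m u \<le> h u"
    "\<And>u. u \<in> {0..1} \<Longrightarrow> h 0 \<le> hm h m u"
proof -
  have in01: "u \<in> {0..1} \<Longrightarrow> of_int \<lfloor>real m * u\<rfloor> / real m \<in> {0..1}" for u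
    using fl_props[OF m, of u] by auto
  show "mono_on {0..1} (hm h m)"
    unfolding hm_def by (intro mono_onI mono_onD[OF h] in01 fl_mono[OF m]) auto
  show "hm h m u \<le> h u" if "u \<in> {0..1}" for u
    unfolding hm_def using that in01 fl_props[OF m that] by (intro mono_onD[OF h]) auto
  show "h 0 \<le> hm h m u" if "u \<in> {0..1}" for u
    unfolding hm_def using that in01 fl_props[OF m that] by (intro mono_onD[OF h]) auto
qed

lemma delta_bound:
  fixes h :: "real \<Rightarrow> real"
  assumes h: "mono_on {0..1} h" and hnn: "\<And>u. u \<in> {0..1} \<Longrightarrow> 0 \<le> h u" and m: "1 \<le> m"
  shows "integral {0..1} h - integral {0..1} (hm h m) \<le> h 1 / real m"
proof -
  define t where "t = 1 / real m"
  have t: "0 < t" "t \<le> 1" using m by (auto simp: t_def)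
  have hmm: "mono_on {0..1} (hm h m)" by (rule hm_props(1)[OF h m])
  have hmnn: "u \<in> {0..1} \<Longrightarrow> 0 \<le> hm h m u" for u
    using hm_props(3)[OF h m, of u] hnn[of 0] by auto
  have "integral {0..1} (hm h m) = integral {0..t} (hm h m) + integral {t..1} (hm h m)"
    using t by (intro Henstock_Kurzweil_Integration.integral_combine[symmetric] mono_int[OF hmm]) auto
  also have "integral {0..t} (hm h m) \<ge> 0"
    using t hmnn by (intro integral_nonneg mono_int[OF hmm]) auto
  ultimately have 1: "integral {t..1} (hm h m) \<le> integral {0..1} (hm h m)" by simp
  have sh: "mono_on {t..1} (\<lambda>u. h (u - t))"
    using t by (intro mono_onI mono_onD[OF h]) auto
  have "integral {t..1} (\<lambda>u. h (u - t)) \<le> integral {t..1} (hm h m)"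
  proof (rule integral_le)
    show "(\<lambda>u. h (u - t)) integrable_on {t..1}" by (rule integrable_on_mono_on[OF sh])
    show "hm h m integrable_on {t..1}" using t by (intro mono_int[OF hmm]) auto
    fix u assume u: "u \<in> {t..1}"
    then have u01: "u \<in> {0..1}" using t by auto
    have f: "0 \<le> of_int \<lfloor>real m * u\<rfloor> / real m" "of_int \<lfloor>real m * u\<rfloor> / real m \<le> u"
      "u - t \<le> of_int \<lfloor>real m * u\<rfloor> / real m"
      using fl_props[OF m u01] by (auto simp: t_def)
    show "h (u - t) \<le> hm h m u"
      unfolding hm_def
    proof (rule mono_onD[OF h])
      show "u - t \<in> {0..1}" using u t by auto
      show "of_int \<lfloor>real m * u\<rfloor> / real m \<in> {0..1}" using f u01 by auto
    qed (rule f(3))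
  qed
  also have "integral {t..1} (\<lambda>u. h (u - t)) = integral {0..1 - t} h"
    using integral_shift_real_ivl[of 0 "-t" "1 - t" h] by simp
  finally have 2: "integral {0..1 - t} h \<le> integral {t..1} (hm h m)" .
  have "integral {0..1} h = integral {0..1 - t} h + integral {1 - t..1} h"
    using t by (intro Henstock_Kurzweil_Integration.integral_combine[symmetric] mono_int[OF h]) auto
  also have "integral {1 - t..1} h \<le> integral {1 - t..1} (\<lambda>u. h 1)"
    using t by (intro integral_le mono_int[OF h]) (auto intro: mono_onD[OF h])
  also have "\<dots> = t * h 1" using t by simp
  finally have 3: "integral {0..1} h \<le> integral {0..1 - t} h + t * h 1" by simp
  show ?thesis using 1 2 3 by (simp add: t_def)
qed


lemma le_div_le1:
  fixes x y :: ennreal assumes "y \<le> 1" shows "x \<le> x / y"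
proof (cases "y = 0")
  case True then show ?thesis by (cases "x = 0") (simp_all add: divide_ennreal_def)
next
  case False
  have yt: "y \<noteq> \<top>" using assms by (auto simp: top_unique)
  have yy: "y / y = 1" using False yt by (simp add: ennreal_divide_self less_top)
  have "x = x / y * y" using yy by (simp add: ennreal_divide_times)
  also have "\<dots> \<le> x / y * 1" by (intro mult_left_mono assms) simp
  finally show ?thesis by simp
qed

lemma Pn'_bounds:
  assumes "t \<in> {0..1}" shows "0 \<le> Pn' n t" "Pn' n t \<le> Pn' n 1"
proof -
  show "0 \<le> Pn' n t" unfolding Pn'_def using assms by (intro sum_nonneg) auto
  show "Pn' n t \<le> Pn' n 1" unfolding Pn'_def using assms
    by (intro sum_mono mult_left_mono) (auto intro!: power_le_one)
qed

lemma Pn'_meas: "(\<lambda>u. Pn' n (1 - u)) \<in> borel_measurable U"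
proof -
  have "(\<lambda>u. Pn' n (1 - u)) \<in> borel_measurable borel"
    by (rule borel_measurable_continuous_onI) (auto intro!: continuous_intros simp: Pn'_def)
  then have "(\<lambda>u. Pn' n (1 - u)) \<in> borel_measurable lborel" by simp
  then show ?thesis by (rule measurable_restrict_space1)
qed

lemma LB_m:
  fixes h :: "real \<Rightarrow> real" and d :: "nat \<Rightarrow> real"
  assumes dh: "(d, h) \<in> feasible n" and adm: "admissible n A" and m: "1 \<le> m"
  shows "ennreal ((\<Sum>i=1..n. d i) - real n * real n * (h 1 / real m)) \<le> ratio_D n A"
proof -
  have dnn: "\<And>i. i \<in> {1..n} \<Longrightarrow> 0 \<le> d i" and hnn: "\<And>u. u \<in> {0..1} \<Longrightarrow> 0 \<le> h u"
    and hmono: "mono_on {0..1} h" and d1: "d 1 \<le> integral {0..1} h"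
    and dcon: "\<And>i q. i \<in> {2..n} \<Longrightarrow> q \<in> {0..1} \<Longrightarrow> d i \<le> integral {0..q} h + (1 - q) * d (i - 1)"
    and norm: "integral {0..1} (\<lambda>u. h u * Pn' n (1 - u)) = 1"
    using dh unfolding feasible_def by auto
  define g where "g = hm h m"
  define e where "e = h 1 / real m"
  define F where "F = distr U borel g"
  have gm: "mono_on {0..1} g" unfolding g_def by (rule hm_props(1)[OF hmono m])
  have gm': "mono_on {0<..<1} g" by (rule mono_on_subset[OF gm]) auto
  have gle: "u \<in> {0..1} \<Longrightarrow> g u \<le> h u" for u unfolding g_def by (rule hm_props(2)[OF hmono m])
  have h1: "u \<in> {0..1} \<Longrightarrow> h u \<le> h 1" for u by (rule mono_onD[OF hmono]) auto
  have gnn: "u \<in> {0..1} \<Longrightarrow> 0 \<le> g u" for u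
    using hm_props(3)[OF hmono m, of u] hnn[of 0] unfolding g_def by auto
  have gb: "\<bar>g u\<bar> \<le> h 1" if "u \<in> {0<..<1}" for u
  proof -
    have u: "u \<in> {0..1}" using that by auto
    show ?thesis using gle[OF u] h1[OF u] gnn[OF u] by linarith
  qed
  have gU: "g \<in> borel_measurable U" by (rule g_meas_U[OF gm'])
  have fam: "F \<in> dist_family"
    unfolding F_def by (rule distrU_fam[OF gm']) (use gnn LU_HK(1)[OF gU gb] in auto)
  define S where "S = (\<lambda>k. h (real k / real m)) ` {0..m}"
  have Sfin: "finite S" unfolding S_def by simp
  have s0: "h 0 \<in> S" unfolding S_def by (rule image_eqI[of _ _ 0]) auto
  have gS: "g u \<in> S" if u: "u \<in> {0<..<1}" for u
  proof -
    have "0 \<le> \<lfloor>real m * u\<rfloor>" using u by auto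
    moreover have "\<lfloor>real m * u\<rfloor> \<le> int m"
    proof -
      have "real m * u \<le> real m" using u by (simp add: mult_left_le)
      then show ?thesis by (simp add: floor_le_iff)
    qed
    ultimately obtain k where k: "\<lfloor>real m * u\<rfloor> = int k" "k \<le> m"
      by (metis nonneg_int_cases of_nat_le_iff)
    then show ?thesis unfolding g_def hm_def S_def by (intro image_eqI[of _ _ k]) auto
  qed
  have AS: "AE x in F. x \<in> S"
    unfolding F_def
    by (subst AE_distr_iff[OF gU]) (auto simp: Sfin finite_imp_closed space_restrict_space gS intro!: AE_I2)
  have low: "ennreal (\<Sum>s=1..n. Dq F s) \<le> ALG A n F"
    by (rule snap_lower[OF fam adm Sfin s0 AS])
  have D1: "Dq F 1 = integral {0..1} g"
    using EF_HK(1)[OF gm', of "\<lambda>x. x" "h 1"] gb by (simp add: F_def)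
  have GF: "GF F c = integral {0..1} (\<lambda>u. min (g u) c)" for c
  proof -
    have "\<bar>min (g u) c\<bar> \<le> h 1 + \<bar>c\<bar>" if "u \<in> {0<..<1}" for u using gb[OF that] by auto
    then show ?thesis unfolding GF_def F_def by (intro EF_HK(1)[OF gm']) auto
  qed
  have del: "integral {0..1} h - integral {0..1} g \<le> e"
    unfolding g_def e_def by (rule delta_bound[OF hmono hnn m])
  have e0: "0 \<le> e" unfolding e_def using hnn[of 1] by simp
  have hint: "\<And>f::real\<Rightarrow>real. mono_on {0..1} f \<Longrightarrow> f integrable_on {0..1}" by (rule integrable_on_mono_on)
  have Dlow: "j \<le> n \<longrightarrow> d j - real j * e \<le> Dq F j" if "1 \<le> j" for j
    using that
  proof (induction j rule: dec_induct)
    case base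
    show ?case using D1 d1 del by simp
  next
    case (step j)
    show ?case
    proof
      assume jn: "Suc j \<le> n"
      define D where "D = Dq F j"
      have IH: "d j - real j * e \<le> D" using step jn by (simp add: D_def)
      have "Dq F (Suc j) = GF F D"
        using step(1) by (cases j) (auto simp: D_def)
      also have "\<dots> = integral {0..1} (\<lambda>u. min (g u) D)" by (rule GF)
      finally have DS: "Dq F (Suc j) = integral {0..1} (\<lambda>u. min (g u) D)" .
      have i1: "(\<lambda>u. min (g u) D) integrable_on {0..1}" by (rule hint[OF mono_min[OF gm]])
      have i2: "(\<lambda>u. min (h u) D) integrable_on {0..1}" by (rule hint[OF mono_min[OF hmono]])
      have i3: "(\<lambda>u. min (h u) (d j)) integrable_on {0..1}" by (rule hint[OF mono_min[OF hmono]])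
      have ih: "h integrable_on {0..1}" "g integrable_on {0..1}" using hint hmono gm by auto
      have A1: "integral {0..1} (\<lambda>u. min (h u) D) \<le> integral {0..1} (\<lambda>u. min (g u) D) + (integral {0..1} h - integral {0..1} g)"
      proof -
        have "integral {0..1} (\<lambda>u. min (h u) D) \<le> integral {0..1} (\<lambda>u. min (g u) D + (h u - g u))"
        proof (intro integral_le i2 integrable_add i1 integrable_diff ih)
          fix x :: real assume x: "x \<in> {0..1}"
          have "g x \<le> h x" by (rule gle[OF x])
          then show "min (h x) D \<le> min (g x) D + (h x - g x)" by (simp add: min_def)
        qed
        also have "\<dots> = integral {0..1} (\<lambda>u. min (g u) D) + (integral {0..1} h - integral {0..1} g)"
          using i1 ih by (simp add: integral_add integral_diff integrable_diff)
        finally show ?thesis .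
      qed
      have A2: "integral {0..1} (\<lambda>u. min (h u) (d j)) - real j * e \<le> integral {0..1} (\<lambda>u. min (h u) D)"
      proof -
        have "integral {0..1} (\<lambda>u. min (h u) (d j) - real j * e) \<le> integral {0..1} (\<lambda>u. min (h u) D)"
          by (intro integral_le i2 integrable_diff i3 integrable_const_ivl) (use IH mult_nonneg_nonneg[OF of_nat_0_le_iff[of j] e0] in \<open>auto simp: min_def\<close>)
        moreover have "integral {0..1} (\<lambda>u. min (h u) (d j) - real j * e) = integral {0..1} (\<lambda>u. min (h u) (d j)) - real j * e"
          using integral_diff[OF i3 integrable_const_ivl[of "real j * e" 0 1]] by simp
        ultimately show ?thesis by simp
      qed
      obtain q where q: "q \<in> {0..1}" "integral {0..q} h + (1 - q) * d j \<le> integral {0..1} (\<lambda>u. min (h u) (d j))"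
        using q_lemma[OF hmono, of "d j"] by blast
      have A3: "d (Suc j) \<le> integral {0..1} (\<lambda>u. min (h u) (d j))"
        using dcon[of "Suc j" q] q jn step(1) by auto
      show "d (Suc j) - real (Suc j) * e \<le> Dq F (Suc j)"
        using A1 A2 A3 del DS by (simp add: algebra_simps)
    qed
  qed
  have "(\<Sum>j=1..n. d j - real j * e) \<le> (\<Sum>j=1..n. Dq F j)"
    by (intro sum_mono) (use Dlow in auto)
  moreover have "(\<Sum>j=1..n. real j * e) \<le> real n * real n * e"
  proof -
    have "(\<Sum>j=1..n. real j * e) \<le> (\<Sum>j=1..n. real n * e)"
      by (intro sum_mono mult_right_mono e0) auto
    also have "\<dots> = real n * real n * e" by simp
    finally show ?thesis .
  qed
  ultimately have sumD: "(\<Sum>i=1..n. d i) - real n * real n * e \<le> (\<Sum>j=1..n. Dq F j)"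
    by (simp add: sum_subtractf)
  have "OPT n F = (\<integral>\<^sup>+u. ennreal (g u * Pn' n (1 - u)) \<partial>U)"
    unfolding F_def by (rule OPT_distrU[OF gm']) (use gnn in auto)
  also have "\<dots> \<le> (\<integral>\<^sup>+u. ennreal (h u * Pn' n (1 - u)) \<partial>U)"
    using gle Pn'_bounds(1)
    by (intro nn_integral_mono ennreal_leI mult_right_mono) (auto simp: space_restrict_space)
  also have "\<dots> = ennreal (integral {0..1} (\<lambda>u. h u * Pn' n (1 - u)))"
  proof (rule NU_HK[where B="h 1 * Pn' n 1"])
    have hU: "h \<in> borel_measurable U" by (rule g_meas_U) (rule mono_on_subset[OF hmono], auto)
    show "(\<lambda>u. h u * Pn' n (1 - u)) \<in> borel_measurable U" using hU Pn'_meas by (rule borel_measurable_times)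
    fix u :: real assume u: "u \<in> {0<..<1}"
    have p: "0 \<le> Pn' n (1 - u)" "Pn' n (1 - u) \<le> Pn' n 1" using Pn'_bounds[of "1 - u" n] u by auto
    have hu: "0 \<le> h u" "h u \<le> h 1" using hnn h1 u by auto
    show "0 \<le> h u * Pn' n (1 - u)" using p hu by simp
    show "\<bar>h u * Pn' n (1 - u)\<bar> \<le> h 1 * Pn' n 1"
      using p hu by (simp add: abs_mult mult_mono)
  qed
  finally have opt1: "OPT n F \<le> 1" using norm by simp
  have "ennreal ((\<Sum>i=1..n. d i) - real n * real n * e) \<le> ennreal (\<Sum>j=1..n. Dq F j)"
    by (rule ennreal_leI[OF sumD])
  also have "\<dots> \<le> ALG A n F" by (rule low)
  also have "\<dots> \<le> ALG A n F / OPT n F" by (rule le_div_le1[OF opt1])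
  also have "\<dots> \<le> ratio_D n A" unfolding ratio_D_def by (rule SUP_upper[OF fam])
  finally show ?thesis by (simp add: e_def)
qed

lemma ennreal_add_le: "0 \<le> b \<Longrightarrow> ennreal (a + b) \<le> ennreal a + ennreal b"
proof (cases "0 \<le> a")
  case True
  assume "0 \<le> b" then show ?thesis using True by (simp add: ennreal_plus)
next
  case False
  assume b: "0 \<le> b"
  have "ennreal (a + b) \<le> ennreal b" using False by (intro ennreal_leI) simp
  also have "\<dots> \<le> ennreal a + ennreal b" by simp
  finally show ?thesis .
qed

lemma LB:
  fixes h :: "real \<Rightarrow> real" and d :: "nat \<Rightarrow> real"
  assumes dh: "(d, h) \<in> feasible n" and adm: "admissible n A"
  shows "ennreal (\<Sum>i=1..n. d i) \<le> ratio_D n A"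
proof (rule ennreal_le_epsilon)
  fix \<epsilon> :: real assume \<epsilon>: "0 < \<epsilon>"
  have h1: "0 \<le> h 1" using dh unfolding feasible_def by auto
  define K where "K = real n * real n * h 1"
  have K0: "0 \<le> K" unfolding K_def using h1 by simp
  define m where "m = nat \<lceil>K / \<epsilon>\<rceil> + 1"
  have m1: "1 \<le> m" unfolding m_def by simp
  have "K / \<epsilon> \<le> real m" unfolding m_def by linarith
  then have "K \<le> \<epsilon> * real m" using \<epsilon> by (simp add: divide_le_eq mult.commute)
  then have Km: "K / real m \<le> \<epsilon>" using m1 by (simp add: divide_le_eq mult.commute)
  have eq: "real n * real n * (h 1 / real m) = K / real m" unfolding K_def by simp
  have "(\<Sum>i=1..n. d i) \<le> ((\<Sum>i=1..n. d i) - real n * real n * (h 1 / real m)) + \<epsilon>"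
    using Km unfolding eq by simp
  then have "ennreal (\<Sum>i=1..n. d i) \<le> ennreal (((\<Sum>i=1..n. d i) - real n * real n * (h 1 / real m)) + \<epsilon>)"
    by (rule ennreal_leI)
  also have "\<dots> \<le> ennreal ((\<Sum>i=1..n. d i) - real n * real n * (h 1 / real m)) + ennreal \<epsilon>"
    using \<epsilon> by (intro ennreal_add_le) simp
  also have "\<dots> \<le> ratio_D n A + ennreal \<epsilon>"
    by (intro add_right_mono LB_m[OF dh adm m1])
  finally show "ennreal (\<Sum>i=1..n. d i) \<le> ratio_D n A + ennreal \<epsilon>" .
qed


fun DM :: "real measure \<Rightarrow> real \<Rightarrow> nat \<Rightarrow> real" where
  "DM F M 0 = 0"
| "DM F M (Suc 0) = GF F M"
| "DM F M (Suc (Suc j)) = GF F (DM F M (Suc j))"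

lemma GF_le_c:
  assumes fam: "F \<in> dist_family" and c: "0 \<le> c" shows "GF F c \<le> c"
proof -
  interpret real_distribution F using fam_D[OF fam] by simp
  show ?thesis unfolding GF_def
    by (rule integral_le_const) (auto intro: integrable_min_c[OF fam])
qed

lemma GF_lip:
  assumes fam: "F \<in> dist_family" and ba: "b \<le> a" shows "GF F a \<le> GF F b + (a - b)"
proof -
  interpret real_distribution F using fam_D[OF fam] by simp
  have "GF F a \<le> (\<integral>x. min x b + (a - b) \<partial>F)"
    unfolding GF_def using ba
    by (intro integral_mono integrable_min_c[OF fam] Bochner_Integration.integrable_add) (auto simp: min_def)
  also have "\<dots> = GF F b + (a - b)"
  proof -
    have p1: "prob UNIV = 1" using prob_space by simp
    show ?thesis
      unfolding GF_def by (subst Bochner_Integration.integral_add) (auto intro: integrable_min_c[OF fam] simp: p1)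
  qed
  finally show ?thesis .
qed

lemma DM_bounds:
  assumes fam: "F \<in> dist_family" and M: "0 \<le> M"
  shows "1 \<le> j \<Longrightarrow> 0 \<le> DM F M j \<and> DM F M j \<le> M"
proof (induction j rule: dec_induct)
  case base then show ?case using GF_nonneg[OF fam M] GF_le_c[OF fam M] by simp
next
  case (step j)
  then obtain j' where j: "j = Suc j'" by (cases j) auto
  then show ?case using step GF_nonneg[OF fam] GF_le_c[OF fam] by fastforce
qed

lemma DM_low:
  assumes fam: "F \<in> dist_family" and M: "0 \<le> M"
  shows "1 \<le> j \<Longrightarrow> Dq F j - (Dq F 1 - GF F M) \<le> DM F M j"
proof (induction j rule: dec_induct)
  case base then show ?case by simp
next
  case (step j)
  then obtain j' where j: "j = Suc j'" by (cases j) auto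
  define a where "a = Dq F j"
  define b where "b = DM F M j"
  have ab: "a - (Dq F 1 - GF F M) \<le> b" using step by (simp add: a_def b_def)
  have "GF F a - (Dq F 1 - GF F M) \<le> GF F b"
  proof (cases "a \<le> b")
    case True
    have "GF F a \<le> GF F b" by (rule GF_mono[OF fam True])
    moreover have "0 \<le> Dq F 1 - GF F M" using GF_le_mean[OF fam, of M] by simp
    ultimately show ?thesis by simp
  next
    case False
    then show ?thesis using GF_lip[OF fam, of b a] ab by simp
  qed
  then show ?case using j by (simp add: a_def b_def)
qed

lemma GF_tendsto:
  assumes fam: "F \<in> dist_family"
  shows "(\<lambda>k::nat. GF F (real k)) \<longlonglongrightarrow> Dq F 1"
proof -
  interpret real_distribution F using fam_D[OF fam] by simp
  have "(\<lambda>k::nat. \<integral>x. min x (real k) \<partial>F) \<longlonglongrightarrow> (\<integral>x. x \<partial>F)"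
  proof (rule integral_dominated_convergence[where w="\<lambda>x. \<bar>x\<bar>"])
    show "integrable F (\<lambda>x. \<bar>x\<bar>)" using fam_D(3)[OF fam] by simp
    show "AE x in F. (\<lambda>k. min x (real k)) \<longlonglongrightarrow> x"
    proof (intro AE_I2)
      fix x :: real
      have "eventually (\<lambda>k. min x (real k) = x) sequentially"
        using eventually_ge_at_top[of "nat \<lceil>x\<rceil>"]
      proof eventually_elim
        case (elim k)
        then have "x \<le> real k" by (meson of_nat_le_iff order_trans real_nat_ceiling_ge)
        then show ?case by simp
      qed
      then show "(\<lambda>k. min x (real k)) \<longlonglongrightarrow> x" by (rule tendsto_eventually)
    qed
    fix k :: nat
    show "AE x in F. norm (min x (real k)) \<le> \<bar>x\<bar>"
      using fam_D(2)[OF fam] by eventually_elim auto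
  qed auto
  then show ?thesis by (simp add: GF_def)
qed

lemma quantile:
  assumes fam: "F \<in> dist_family"
  shows "distr U borel (\<lambda>u. Inf {x. u \<le> cdf F x}) = F"
    "mono_on {0<..<1} (\<lambda>u. Inf {x. u \<le> cdf F x})"
    "\<And>u. u \<in> {0<..<1} \<Longrightarrow> 0 \<le> Inf {x. u \<le> cdf F x}"
proof -
  interpret C: cdf_distribution F using fam_D(1)[OF fam] unfolding cdf_distribution_def .
  show "distr U borel (\<lambda>u. Inf {x. u \<le> cdf F x}) = F" by (rule C.distr_I_eq_M)
  show "mono_on {0<..<1} (\<lambda>u. Inf {x. u \<le> cdf F x})" by (rule C.mono_I)
  fix u :: real assume u: "u \<in> {0<..<1}"
  have c0: "cdf F x = 0" if x: "x < 0" for x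
  proof -
    have "emeasure F {..x} = emeasure F {}"
      by (rule emeasure_eq_AE) (use fam_D(2)[OF fam] x in \<open>auto elim!: eventually_mono\<close>)
    then show ?thesis by (simp add: cdf_def measure_def)
  qed
  show "0 \<le> Inf {x. u \<le> cdf F x}"
  proof (rule ccontr)
    assume neg: "\<not> 0 \<le> Inf {x. u \<le> cdf F x}"
    have "u \<le> cdf F (Inf {x. u \<le> cdf F x})"
      using C.pseudoinverse[of u "Inf {x. u \<le> cdf F x}"] u by auto
    then show False using c0[of "Inf {x. u \<le> cdf F x}"] neg u by auto
  qed
qed

lemma Pn'_ge1: assumes "1 \<le> n" "t \<in> {0..1}" shows "1 \<le> Pn' n t"
proof -
  have "real 1 * t ^ (1 - 1) \<le> (\<Sum>i=1..n. real i * t ^ (i - 1))"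
    by (rule member_le_sum) (use assms in auto)
  then show ?thesis by (simp add: Pn'_def)
qed


lemma UB_feasible:
  assumes n: "1 \<le> n" and fam: "F \<in> dist_family" and M: "0 \<le> M" and GM: "0 < GF F M"
  shows "\<exists>OM. GF F M \<le> OM \<and> ennreal OM \<le> OPT n F \<and>
     ennreal ((\<Sum>j=1..n. DM F M j) / OM) \<le> (SUP p\<in>feasible n. ennreal (\<Sum>i=1..n. fst p i))"
proof -
  define Q where "Q u = Inf {x. u \<le> cdf F x}" for u
  have Qd: "distr U borel Q = F" unfolding Q_def by (rule quantile(1)[OF fam])
  have Qm: "mono_on {0<..<1} Q" unfolding Q_def by (rule quantile(2)[OF fam])
  have Qnn: "u \<in> {0<..<1} \<Longrightarrow> 0 \<le> Q u" for u unfolding Q_def by (rule quantile(3)[OF fam])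
  have GFQ: "GF F c = integral {0..1} (\<lambda>u. min (Q u) c)" if c: "0 \<le> c" for c
  proof -
    have "integral\<^sup>L (distr U borel Q) (\<lambda>x. min x c) = integral {0..1} (\<lambda>u. min (Q u) c)"
      by (rule EF_HK(1)[OF Qm, where B=c]) (use Qnn c in auto)
    then show ?thesis unfolding Qd GF_def .
  qed
  have OPTQ: "OPT n F = (\<integral>\<^sup>+u. ennreal (Q u * Pn' n (1 - u)) \<partial>U)"
    using OPT_distrU[OF Qm Qnn, of n] unfolding Qd by simp
  define hq where "hq u = (if u \<le> 0 then 0 else if 1 \<le> u then M else min (Q u) M)" for u
  have hq_in: "u \<in> {0<..<1} \<Longrightarrow> hq u = min (Q u) M" for u by (simp add: hq_def)
  have hq_b: "u \<in> {0..1} \<Longrightarrow> 0 \<le> hq u \<and> hq u \<le> M" for u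
    using Qnn M by (auto simp: hq_def)
  have hq_m: "mono_on {0..1} hq"
  proof (rule mono_onI)
    fix r s :: real assume r: "r \<in> {0..1}" and s: "s \<in> {0..1}" and rs: "r \<le> s"
    show "hq r \<le> hq s"
    proof (cases "r \<le> 0 \<or> 1 \<le> s")
      case True
      then show ?thesis using hq_b[OF r] hq_b[OF s] r s rs by (auto simp: hq_def)
    next
      case False
      then have "r \<in> {0<..<1}" "s \<in> {0<..<1}" using r s rs by auto
      then show ?thesis using mono_onD[OF Qm _ _ rs] by (auto simp: hq_def intro: min.mono)
    qed
  qed
  have hqU: "hq \<in> borel_measurable U"
    by (rule g_meas_U) (rule mono_on_subset[OF hq_m], auto)
  have hq_le: "u \<in> {0<..<1} \<Longrightarrow> hq u \<le> Q u" for u by (simp add: hq_def)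
  define OM where "OM = integral {0..1} (\<lambda>u. hq u * Pn' n (1 - u))"
  have phib: "\<bar>hq u * Pn' n (1 - u)\<bar> \<le> M * Pn' n 1" "0 \<le> hq u * Pn' n (1 - u)" if u: "u \<in> {0<..<1}" for u
  proof -
    have p: "0 \<le> Pn' n (1 - u)" "Pn' n (1 - u) \<le> Pn' n 1" using Pn'_bounds[of "1 - u" n] u by auto
    have "0 \<le> hq u" "hq u \<le> M" using hq_b[of u] u by auto
    then show "\<bar>hq u * Pn' n (1 - u)\<bar> \<le> M * Pn' n 1" "0 \<le> hq u * Pn' n (1 - u)"
      using p by (auto simp: abs_mult intro: mult_mono)
  qed
  have phim: "(\<lambda>u. hq u * Pn' n (1 - u)) \<in> borel_measurable U"
    using hqU Pn'_meas by (rule borel_measurable_times)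
  have phiint: "(\<lambda>u. hq u * Pn' n (1 - u)) integrable_on {0..1}"
    by (rule LU_HK(3)[OF phim phib(1)])
  have OMe: "ennreal OM = (\<integral>\<^sup>+u. ennreal (hq u * Pn' n (1 - u)) \<partial>U)"
    unfolding OM_def by (rule NU_HK[OF phim phib(1) phib(2), symmetric])
  have OM_le: "ennreal OM \<le> OPT n F"
    unfolding OMe OPTQ
    using hq_le Pn'_bounds(1)
    by (intro nn_integral_mono ennreal_leI mult_right_mono) (auto simp: space_restrict_space)
  have intHq: "integral {0..1} hq = GF F M"
  proof -
    have "integral {0..1} hq = integral {0..1} (\<lambda>u. min (Q u) M)"
      by (rule integral_spike[of "{0,1}"]) (auto simp: hq_def)
    then show ?thesis using GFQ[OF M] by simp
  qed
  have GM_OM: "GF F M \<le> OM"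
  proof -
    have "integral {0..1} hq \<le> OM"
      unfolding OM_def
    proof (rule integral_le)
      show "hq integrable_on {0..1}" by (rule integrable_on_mono_on[OF hq_m])
      show "(\<lambda>u. hq u * Pn' n (1 - u)) integrable_on {0..1}" by (rule phiint)
      fix u :: real assume u: "u \<in> {0..1}"
      have "1 \<le> Pn' n (1 - u)" using Pn'_ge1[OF n, of "1 - u"] u by auto
      then show "hq u \<le> hq u * Pn' n (1 - u)" using hq_b[OF u] by (simp add: mult_le_cancel_left1)
    qed
    then show ?thesis using intHq by simp
  qed
  have OMp: "0 < OM" using GM GM_OM by simp
  define ht where "ht u = hq u / OM" for u
  define dt where "dt j = DM F M j / OM" for j
  have "(dt, ht) \<in> feasible n"
    unfolding feasible_def
  proof (intro CollectI case_prodI conjI ballI)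
    fix i assume "i \<in> {1..n}"
    then show "0 \<le> dt i" unfolding dt_def using DM_bounds[OF fam M, of i] OMp by auto
  next
    fix u :: real assume "u \<in> {0..1}"
    then show "0 \<le> ht u" unfolding ht_def using hq_b OMp by auto
  next
    show "mono_on {0..1} ht" unfolding ht_def
      by (rule mono_onI) (use OMp mono_onD[OF hq_m] in \<open>auto intro: divide_right_mono\<close>)
    then show "ht integrable_on {0..1}" by (rule integrable_on_mono_on)
    show "dt 1 \<le> integral {0..1} ht"
      unfolding dt_def ht_def integral_divide intHq by simp
    show "integral {0..1} (\<lambda>u. ht u * Pn' n (1 - u)) = 1"
      unfolding ht_def using integral_divide[of "{0..1}" "\<lambda>u. hq u * Pn' n (1 - u)" OM] OMp
      by (simp add: OM_def[symmetric])
  next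
    fix i and q :: real assume i: "i \<in> {2..n}" and q: "q \<in> {0..1}"
    define c where "c = DM F M (i - 1)"
    have cb: "0 \<le> c" "c \<le> M" using DM_bounds[OF fam M, of "i - 1"] i by (auto simp: c_def)
    obtain j where j: "i = Suc (Suc j)" using i by (metis atLeastAtMost_iff add_2_eq_Suc le_Suc_ex)
    have "DM F M i = GF F c" by (simp add: c_def j)
    also have "\<dots> = integral {0..1} (\<lambda>u. min (Q u) c)" by (rule GFQ[OF cb(1)])
    also have "\<dots> = integral {0..1} (\<lambda>u. min (hq u) c)"
      by (rule integral_spike[of "{0,1}"]) (use cb in \<open>auto simp: hq_def min_def\<close>)
    also have "\<dots> = integral {0..q} (\<lambda>u. min (hq u) c) + integral {q..1} (\<lambda>u. min (hq u) c)"
      using q by (intro Henstock_Kurzweil_Integration.integral_combine[symmetric] mono_int[OF mono_min[OF hq_m]]) auto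
    also have "\<dots> \<le> integral {0..q} hq + integral {q..1} (\<lambda>u. c)"
      using q by (intro add_mono integral_le mono_int[OF mono_min[OF hq_m]] mono_int[OF hq_m]) auto
    also have "\<dots> = integral {0..q} hq + (1 - q) * c" using q by simp
    finally have le: "DM F M i \<le> integral {0..q} hq + (1 - q) * c" .
    have "dt i \<le> (integral {0..q} hq + (1 - q) * c) / OM"
      unfolding dt_def using le OMp by (simp add: divide_right_mono)
    also have "\<dots> = integral {0..q} ht + (1 - q) * dt (i - 1)"
      unfolding ht_def dt_def c_def integral_divide by (simp add: add_divide_distrib)
    finally show "dt i \<le> integral {0..q} ht + (1 - q) * dt (i - 1)" .
  qed
  then have "ennreal (\<Sum>i=1..n. fst (dt, ht) i) \<le> (SUP p\<in>feasible n. ennreal (\<Sum>i=1..n. fst p i))"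
    by (rule SUP_upper)
  moreover have "(\<Sum>i=1..n. fst (dt, ht) i) = (\<Sum>j=1..n. DM F M j) / OM"
    by (simp add: dt_def sum_divide_distrib)
  ultimately show ?thesis using GM_OM OM_le by auto
qed

lemma div_bound:
  assumes x: "0 \<le> x" and b: "0 < b" and bA: "ennreal b \<le> A"
  shows "ennreal x / A \<le> ennreal (x / b)"
proof (cases A)
  case (real a)
  then have a: "0 \<le> a" "b \<le> a" using bA b by (auto simp: ennreal_le_iff2 ennreal_le_iff)
  have ap: "0 < a" using a b by linarith
  have "ennreal x / A = ennreal (x / a)" using real x ap by (simp add: divide_ennreal)
  also have "\<dots> \<le> ennreal (x / b)" using a x b by (intro ennreal_leI frac_le) auto
  finally show ?thesis .
next
  case top then show ?thesis by simp
qed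

lemma UB_F:
  assumes n: "1 \<le> n" and fam: "F \<in> dist_family"
  shows "ennreal (\<Sum>s=1..n. Dq F s) / OPT n F \<le> (SUP p\<in>feasible n. ennreal (\<Sum>i=1..n. fst p i))"
    (is "_ \<le> ?S")
proof (cases "Dq F 1 = 0")
  case True
  have "\<forall>s\<in>{1..n}. Dq F s = 0"
    using Dq_nonneg[OF fam] Dq_le_mean[OF fam] True by (auto intro: antisym)
  then show ?thesis by simp
next
  case False
  define \<mu> where "\<mu> = Dq F 1"
  have mu: "0 < \<mu>" using False Dq_nonneg[OF fam, of 1] unfolding \<mu>_def by linarith
  show ?thesis
  proof (rule ennreal_le_epsilon)
    fix \<epsilon> :: real assume \<epsilon>: "0 < \<epsilon>"
    define \<eta> where "\<eta> = \<epsilon> * \<mu> / (2 * real n)"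
    have eta: "0 < \<eta>" unfolding \<eta>_def using \<epsilon> mu n by auto
    have t: "(\<lambda>k::nat. GF F (real k)) \<longlonglongrightarrow> \<mu>" unfolding \<mu>_def by (rule GF_tendsto[OF fam])
    have "eventually (\<lambda>k. \<mu> / 2 < GF F (real k)) sequentially"
      by (rule order_tendstoD(1)[OF t]) (use mu in simp)
    moreover have "eventually (\<lambda>k. \<mu> - \<eta> < GF F (real k)) sequentially"
      by (rule order_tendstoD(1)[OF t]) (use eta in simp)
    ultimately have "eventually (\<lambda>k. \<mu> / 2 < GF F (real k) \<and> \<mu> - \<eta> < GF F (real k)) sequentially"
      by (rule eventually_conj)
    then obtain k where k: "\<mu> / 2 < GF F (real k)" "\<mu> - \<eta> < GF F (real k)"
      by (auto simp: eventually_sequentially)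
    define M where "M = real k"
    have M: "0 \<le> M" unfolding M_def by simp
    have GM: "0 < GF F M" using k mu unfolding M_def by linarith
    obtain OM where OM: "GF F M \<le> OM" "ennreal OM \<le> OPT n F"
      "ennreal ((\<Sum>j=1..n. DM F M j) / OM) \<le> ?S"
      using UB_feasible[OF n fam M GM] by blast
    have OMp: "0 < OM" using GM OM(1) by simp
    define \<delta> where "\<delta> = \<mu> - GF F M"
    have del: "0 \<le> \<delta>" "\<delta> < \<eta>" using GF_le_mean[OF fam, of M] k unfolding \<delta>_def \<mu>_def M_def by auto
    have sumD: "(\<Sum>s=1..n. Dq F s) \<le> (\<Sum>j=1..n. DM F M j) + real n * \<delta>"
    proof -
      have "(\<Sum>s=1..n. Dq F s) \<le> (\<Sum>j=1..n. DM F M j + \<delta>)"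
      proof (intro sum_mono)
        fix s assume "s \<in> {1..n}"
        then have "1 \<le> s" by simp
        show "Dq F s \<le> DM F M s + \<delta>"
          unfolding \<delta>_def \<mu>_def using DM_low[OF fam M \<open>1 \<le> s\<close>] by linarith
      qed
      then show ?thesis by (simp add: sum.distrib)
    qed
    have nd: "real n * \<delta> \<le> \<epsilon> * OM"
    proof -
      have "real n * \<delta> \<le> real n * \<eta>" using del(2) n by (intro mult_left_mono) auto
      also have "\<dots> = \<epsilon> * \<mu> / 2" unfolding \<eta>_def using n by (simp add: field_simps)
      also have "\<dots> \<le> \<epsilon> * GF F M" using k(1) \<epsilon> unfolding M_def by (simp add: field_simps)
      also have "\<dots> \<le> \<epsilon> * OM" using OM(1) \<epsilon> by simp
      finally show ?thesis .
    qed
    have s0: "0 \<le> (\<Sum>s=1..n. Dq F s)" using Dq_nonneg[OF fam] by (simp add: sum_nonneg)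
    have sDM0: "0 \<le> (\<Sum>j=1..n. DM F M j)" using DM_bounds[OF fam M] by (auto intro: sum_nonneg)
    have "ennreal (\<Sum>s=1..n. Dq F s) / OPT n F \<le> ennreal ((\<Sum>s=1..n. Dq F s) / OM)"
      by (rule div_bound[OF s0 OMp OM(2)])
    also have "(\<Sum>s=1..n. Dq F s) / OM \<le> (\<Sum>j=1..n. DM F M j) / OM + \<epsilon>"
    proof -
      have "(\<Sum>s=1..n. Dq F s) / OM \<le> ((\<Sum>j=1..n. DM F M j) + real n * \<delta>) / OM"
        using sumD OMp by (simp add: divide_right_mono)
      also have "\<dots> = (\<Sum>j=1..n. DM F M j) / OM + real n * \<delta> / OM" by (simp add: add_divide_distrib)
      also have "real n * \<delta> / OM \<le> \<epsilon>" using nd OMp by (simp add: divide_le_eq)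
      finally show ?thesis by simp
    qed
    then have "ennreal ((\<Sum>s=1..n. Dq F s) / OM) \<le> ennreal ((\<Sum>j=1..n. DM F M j) / OM + \<epsilon>)"
      by (rule ennreal_leI)
    also have "\<dots> = ennreal ((\<Sum>j=1..n. DM F M j) / OM) + ennreal \<epsilon>"
      using sDM0 OMp \<epsilon> by (intro ennreal_plus) auto
    also have "\<dots> \<le> ?S + ennreal \<epsilon>" using OM(3) by (rule add_right_mono)
    finally show "ennreal (\<Sum>s=1..n. Dq F s) / OPT n F \<le> ?S + ennreal \<epsilon>" .
  qed
qed


lemma Astar_admissible: "admissible n Astar"
  unfolding admissible_def
proof (intro conjI ballI)
  show "\<forall>F i xs l. 1 \<le> i \<longrightarrow> l = i - 1 \<longrightarrow> 1 \<le> Astar F n i xs l"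
    using Astar_forced unfolding forced_def by blast
  fix F assume fam: "F \<in> dist_family"
  interpret F: real_distribution F using fam_D[OF fam] by simp
  have "osdc_cost Astar F n \<in> Om \<rightarrow>\<^sub>M borel"
    unfolding osdc_cost_def
  proof (intro borel_measurable_sum borel_measurable_times Om_comp)
    fix i
    show "(\<lambda>w. real (osdc_T Astar F n w i)) \<in> borel_measurable Om"
      by (rule measurable_compose[OF T_meas[OF Astar_dec_meas]]) (simp add: measurable_count_space_eq1)
  qed
  moreover have "mg 0 undefined \<in> PiM {1..n} (\<lambda>_. F) \<rightarrow>\<^sub>M Om" by (rule mg_meas) simp
  ultimately have "(\<lambda>y. osdc_cost Astar F n (mg 0 undefined y)) \<in> borel_measurable (PiM {1..n} (\<lambda>_. F))"
    using measurable_compose by blast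
  moreover have "mg 0 undefined y = y" for y by (simp add: mg_def)
  ultimately show "osdc_cost Astar F n \<in> borel_measurable (iid F n)" by (simp add: iid_def)
qed

theorem mainTheorem4:
  fixes n :: nat
  assumes "1 \<le> n"
  shows "R_star n = (SUP p \<in> feasible n. ennreal (\<Sum>i=1..n. fst p i))"
proof (rule antisym)
  show "R_star n \<le> (SUP p \<in> feasible n. ennreal (\<Sum>i=1..n. fst p i))"
  proof -
    have "R_star n \<le> ratio_D n Astar"
      unfolding R_star_def by (rule INF_lower) (simp add: Astar_admissible)
    also have "\<dots> \<le> (SUP p \<in> feasible n. ennreal (\<Sum>i=1..n. fst p i))"
      unfolding ratio_D_def
    proof (rule SUP_least)
      fix F assume fam: "F \<in> dist_family"
      have "ALG Astar n F / OPT n F \<le> ennreal (\<Sum>s=1..n. Dq F s) / OPT n F"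
        by (rule divide_right_mono_ennreal[OF dp_upper[OF fam]])
      also have "\<dots> \<le> (SUP p \<in> feasible n. ennreal (\<Sum>i=1..n. fst p i))"
        by (rule UB_F[OF assms fam])
      finally show "ALG Astar n F / OPT n F \<le> (SUP p \<in> feasible n. ennreal (\<Sum>i=1..n. fst p i))" .
    qed
    finally show ?thesis .
  qed
  show "(SUP p \<in> feasible n. ennreal (\<Sum>i=1..n. fst p i)) \<le> R_star n"
  proof (rule SUP_least)
    fix p assume p: "p \<in> feasible n"
    show "ennreal (\<Sum>i=1..n. fst p i) \<le> R_star n"
      unfolding R_star_def
    proof (rule INF_greatest)
      fix A assume "A \<in> {A. admissible n A}"
      then have adm: "admissible n A" by simp
      have "(fst p, snd p) \<in> feasible n" using p by simp
      then show "ennreal (\<Sum>i=1..n. fst p i) \<le> ratio_D n A" by (rule LB[OF _ adm])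
    qed
  qed
qed


end
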